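(* Let $G$ be a $k$-group and $A$ a continuous $G$-module (in the $k$-sense). Then the row augmentation $j_{h,k}^*\colon C_{lc,k}^*(G,A)\hookrightarrow\mathrm{Tot}\,A_{lc,k}^{*,*}(G,A)^G$ induces an isomorphism in cohomology.
   Context: For a topological space $X$, $\mathrm{k}X$ denotes its $k$-ification; products of $k$-spaces are taken as $\mathrm{k}(X\times Y)$ and denoted $\times_k$. A $k$-group is a group $G$ with a topology such that multiplication is continuous on $\mathrm{k}(G\times G)$; a continuous $G$-module here is an abelian topological group $A$ with an action of $G$ by automorphisms continuous on $\mathrm{k}(G\times A)$. For an identity neighbourhood $U$ put $\Gamma_U^0:=G$ and, for $q\ge1$, $\Gamma_U^q:=\{(g_0,\dots,g_q)\in G^{q+1}\mid g_i^{-1}g_j\in U\ \forall i,j\}$. $G$ acts on maps $f\colon G^{n+1}\to A$ by $(g.f)(g_0,\dots,g_n)=g.f(g^{-1}g_0,\dots,g^{-1}g_n)$, with differential $df(g_0,\dots,g_{n+1})=\sum_i(-1)^if(g_0,\dots,\widehat{g_i},\dots,g_{n+1})$. $C_{lc,k}^n(G,A)$ is the complex of $G$-equivariant maps $f\colon G^{n+1}\to A$ such that for some identity neighbourhood $U$ the restriction to $\mathrm{k}\Gamma_U^n$ is continuous. $A_{lc,k}^{p,q}(G,A)$ is the group of maps $f\colon G^{p+1}\times G^{q+1}\to A$ such that for some identity neighbourhood $U$ the restriction to $\mathrm{k}G^{p+1}\times_k\mathrm{k}\Gamma_U^q$ is continuous, with $d_hf(x_0,\dots,x_{p+1},\vec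 y)=\sum_i(-1)^if(x_0,\dots,\widehat{x_i},\dots,x_{p+1},\vec y)$ and $d_vf(\vec x,y_0,\dots,y_{q+1})=(-1)^p\sum_i(-1)^if(\vec x,y_0,\dots,\widehat{y_i},\dots,y_{q+1})$. $G$ acts by $(g.f)(\vec x,\vec y)=g.f(g^{-1}\vec x,g^{-1}\vec y)$; $\mathrm{Tot}\,A_{lc,k}^{*,*}(G,A)^G$ is the total complex of the fixed-point double complex (differential $d_h+d_v$), and $j_{h,k}(f)(x_0,\vec y)=f(\vec y)$. *)

theory Defs
  imports "HOL-Analysis.Analysis" "HOL-Algebra.Group" "HOL-Library.Function_Algebras"
begin

definition kify :: "'a topology \<Rightarrow> 'a topology" where
  "kify X = topology (\<lambda>U. U \<subseteq> topspace X \<and>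
      (\<forall>K. compactin X K \<longrightarrow> openin (subtopology X K) (K \<inter> U)))"

lemma istopology_kify:
  "istopology (\<lambda>U. U \<subseteq> topspace X \<and>
      (\<forall>K. compactin X K \<longrightarrow> openin (subtopology X K) (K \<inter> U)))"
  unfolding istopology_def
proof (rule conjI; intro allI impI)
  fix S T assume a: "S \<subseteq> topspace X \<and> (\<forall>K. compactin X K \<longrightarrow> openin (subtopology X K) (K \<inter> S))"
    "T \<subseteq> topspace X \<and> (\<forall>K. compactin X K \<longrightarrow> openin (subtopology X K) (K \<inter> T))"
  show "S \<inter> T \<subseteq> topspace X \<and> (\<forall>K. compactin X K \<longrightarrow> openin (subtopology X K) (K \<inter> (S \<inter> T)))"
  proof (intro conjI allI impI)
    show "S \<inter> T \<subseteq> topspace X" using a by blast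
    fix K assume "compactin X K"
    then have "openin (subtopology X K) ((K \<inter> S) \<inter> (K \<inter> T))" using a by blast
    moreover have "(K \<inter> S) \<inter> (K \<inter> T) = K \<inter> (S \<inter> T)" by blast
    ultimately show "openin (subtopology X K) (K \<inter> (S \<inter> T))" by simp
  qed
next
  fix \<K> assume a: "\<forall>U\<in>\<K>. U \<subseteq> topspace X \<and> (\<forall>K. compactin X K \<longrightarrow> openin (subtopology X K) (K \<inter> U))"
  show "\<Union>\<K> \<subseteq> topspace X \<and> (\<forall>K. compactin X K \<longrightarrow> openin (subtopology X K) (K \<inter> \<Union>\<K>))"
  proof (intro conjI allI impI)
    show "\<Union>\<K> \<subseteq> topspace X" using a by blast
    fix K assume "compactin X K"
    then have "openin (subtopology X K) (\<Union>U\<in>\<K>. K \<inter> U)" using a by blast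
    moreover have "(\<Union>U\<in>\<K>. K \<inter> U) = K \<inter> \<Union>\<K>" by blast
    ultimately show "openin (subtopology X K) (K \<inter> \<Union>\<K>)" by simp
  qed
qed

lemma openin_kify:
  "openin (kify X) U \<longleftrightarrow> U \<subseteq> topspace X \<and>
      (\<forall>K. compactin X K \<longrightarrow> openin (subtopology X K) (K \<inter> U))"
  unfolding kify_def by (simp add: istopology_kify)

definition kprod :: "'a topology \<Rightarrow> 'b topology \<Rightarrow> ('a \<times> 'b) topology" where
  "kprod X Y = kify (prod_topology X Y)"

definition k_group :: "('g, 'b) monoid_scheme \<Rightarrow> 'g topology \<Rightarrow> bool" where
  "k_group G T \<longleftrightarrow> group G \<and> topspace T = carrier G \<and>
     continuous_map (kprod T T) T (\<lambda>(g, h). g \<otimes>\<^bsub>G\<^esub> h)"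

text \<open>Abelian topological group: the abelian group is the type 'a (all of it), with topology TA.\<close>
definition ab_top_group :: "('a::ab_group_add) topology \<Rightarrow> bool" where
  "ab_top_group TA \<longleftrightarrow> topspace TA = UNIV \<and>
     continuous_map (prod_topology TA TA) TA (\<lambda>(a, b). a + b) \<and>
     continuous_map TA TA uminus"

definition cont_G_module ::
  "('g, 'b) monoid_scheme \<Rightarrow> 'g topology \<Rightarrow> ('a::ab_group_add) topology \<Rightarrow> ('g \<Rightarrow> 'a \<Rightarrow> 'a) \<Rightarrow> bool" where
  "cont_G_module G T TA act \<longleftrightarrow> ab_top_group TA \<and>
     (\<forall>a. act \<one>\<^bsub>G\<^esub> a = a) \<and>
     (\<forall>g\<in>carrier G. \<forall>h\<in>carrier G. \<forall>a. act (g \<otimes>\<^bsub>G\<^esub> h) a = act g (act h a)) \<and>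
     (\<forall>g\<in>carrier G. \<forall>a b. act g (a + b) = act g a + act g b) \<and>
     (\<forall>g\<in>carrier G. bij (act g)) \<and>
     continuous_map (kprod T TA) TA (\<lambda>(g, a). act g a)"

text \<open>G^{n+1} is represented by extensional functions {..n} \<rightarrow> carrier G.\<close>
definition tuples :: "('g, 'b) monoid_scheme \<Rightarrow> nat \<Rightarrow> (nat \<Rightarrow> 'g) set" where
  "tuples G n = {..n} \<rightarrow>\<^sub>E carrier G"

definition tuple_top :: "'g topology \<Rightarrow> nat \<Rightarrow> (nat \<Rightarrow> 'g) topology" where
  "tuple_top T n = product_topology (\<lambda>_. T) {..n}"

text \<open>Omit the i-th entry of an (n+1)-tuple (x_0,...,x_n), giving an n-tuple.\<close>
definition omit :: "nat \<Rightarrow> nat \<Rightarrow> (nat \<Rightarrow> 'g) \<Rightarrow> (nat \<Rightarrow> 'g)" where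
  "omit n i x = (\<lambda>j. if j < n then (if j < i then x j else x (Suc j)) else undefined)"

definition ltrans :: "('g, 'b) monoid_scheme \<Rightarrow> nat \<Rightarrow> 'g \<Rightarrow> (nat \<Rightarrow> 'g) \<Rightarrow> (nat \<Rightarrow> 'g)" where
  "ltrans G n g x = restrict (\<lambda>j. g \<otimes>\<^bsub>G\<^esub> x j) {..n}"

definition identity_nbhd :: "('g, 'b) monoid_scheme \<Rightarrow> 'g topology \<Rightarrow> 'g set \<Rightarrow> bool" where
  "identity_nbhd G T U \<longleftrightarrow> U \<subseteq> carrier G \<and> (\<exists>V. openin T V \<and> \<one>\<^bsub>G\<^esub> \<in> V \<and> V \<subseteq> U)"

text \<open>\<Gamma>_U^q; for q = 0 this is all of G (as 1 \<in> U).\<close>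
definition Gamma :: "('g, 'b) monoid_scheme \<Rightarrow> 'g set \<Rightarrow> nat \<Rightarrow> (nat \<Rightarrow> 'g) set" where
  "Gamma G U q = {x \<in> tuples G q. \<forall>i\<le>q. \<forall>j\<le>q. inv\<^bsub>G\<^esub> (x i) \<otimes>\<^bsub>G\<^esub> x j \<in> U}"

definition sgn_sum :: "nat \<Rightarrow> (nat \<Rightarrow> 'a::ab_group_add) \<Rightarrow> 'a" where
  "sgn_sum m t = (\<Sum>i\<le>m. (if even i then t i else - t i))"

definition C_lck ::
  "('g, 'b) monoid_scheme \<Rightarrow> 'g topology \<Rightarrow> ('a::ab_group_add) topology \<Rightarrow> ('g \<Rightarrow> 'a \<Rightarrow> 'a)
   \<Rightarrow> nat \<Rightarrow> ((nat \<Rightarrow> 'g) \<Rightarrow> 'a) set" where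
  "C_lck G T TA act n = {f.
     (\<forall>x. x \<notin> tuples G n \<longrightarrow> f x = 0) \<and>
     (\<forall>g\<in>carrier G. \<forall>x\<in>tuples G n. act g (f (ltrans G n (inv\<^bsub>G\<^esub> g) x)) = f x) \<and>
     (\<exists>U. identity_nbhd G T U \<and>
        continuous_map (kify (subtopology (tuple_top T n) (Gamma G U n))) TA f)}"

definition d_C :: "('g, 'b) monoid_scheme \<Rightarrow> nat \<Rightarrow> ((nat \<Rightarrow> 'g) \<Rightarrow> 'a::ab_group_add) \<Rightarrow> ((nat \<Rightarrow> 'g) \<Rightarrow> 'a)" where
  "d_C G n f = (\<lambda>x. if x \<in> tuples G (Suc n) then sgn_sum (Suc n) (\<lambda>i. f (omit (Suc n) i x)) else 0)"

definition A_lck ::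
  "('g, 'b) monoid_scheme \<Rightarrow> 'g topology \<Rightarrow> ('a::ab_group_add) topology
   \<Rightarrow> nat \<Rightarrow> nat \<Rightarrow> ((nat \<Rightarrow> 'g) \<Rightarrow> (nat \<Rightarrow> 'g) \<Rightarrow> 'a) set" where
  "A_lck G T TA p q = {f.
     (\<forall>x y. \<not> (x \<in> tuples G p \<and> y \<in> tuples G q) \<longrightarrow> f x y = 0) \<and>
     (\<exists>U. identity_nbhd G T U \<and>
        continuous_map (kprod (kify (tuple_top T p)) (kify (subtopology (tuple_top T q) (Gamma G U q))))
          TA (\<lambda>(x, y). f x y))}"

definition A_lck_fixed ::
  "('g, 'b) monoid_scheme \<Rightarrow> 'g topology \<Rightarrow> ('a::ab_group_add) topology \<Rightarrow> ('g \<Rightarrow> 'a \<Rightarrow> 'a)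
   \<Rightarrow> nat \<Rightarrow> nat \<Rightarrow> ((nat \<Rightarrow> 'g) \<Rightarrow> (nat \<Rightarrow> 'g) \<Rightarrow> 'a) set" where
  "A_lck_fixed G T TA act p q = {f \<in> A_lck G T TA p q.
     \<forall>g\<in>carrier G. \<forall>x\<in>tuples G p. \<forall>y\<in>tuples G q.
        act g (f (ltrans G p (inv\<^bsub>G\<^esub> g) x) (ltrans G q (inv\<^bsub>G\<^esub> g) y)) = f x y}"

definition d_h :: "('g, 'b) monoid_scheme \<Rightarrow> nat \<Rightarrow> nat
   \<Rightarrow> ((nat \<Rightarrow> 'g) \<Rightarrow> (nat \<Rightarrow> 'g) \<Rightarrow> 'a::ab_group_add) \<Rightarrow> ((nat \<Rightarrow> 'g) \<Rightarrow> (nat \<Rightarrow> 'g) \<Rightarrow> 'a)" where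
  "d_h G p q f = (\<lambda>x y. if x \<in> tuples G (Suc p) \<and> y \<in> tuples G q
      then sgn_sum (Suc p) (\<lambda>i. f (omit (Suc p) i x) y) else 0)"

definition d_v :: "('g, 'b) monoid_scheme \<Rightarrow> nat \<Rightarrow> nat
   \<Rightarrow> ((nat \<Rightarrow> 'g) \<Rightarrow> (nat \<Rightarrow> 'g) \<Rightarrow> 'a::ab_group_add) \<Rightarrow> ((nat \<Rightarrow> 'g) \<Rightarrow> (nat \<Rightarrow> 'g) \<Rightarrow> 'a)" where
  "d_v G p q f = (\<lambda>x y. if x \<in> tuples G p \<and> y \<in> tuples G (Suc q)
      then (if even p then id else uminus) (sgn_sum (Suc q) (\<lambda>i. f x (omit (Suc q) i y))) else 0)"

text \<open>Tot^n = \<Oplus>_{p+q=n} A^{p,q}(G,A)^G, an element being the family of its components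
  F p \<in> A^{p,n-p} (p \<le> n), with F p = 0 for p > n.\<close>
definition Tot ::
  "('g, 'b) monoid_scheme \<Rightarrow> 'g topology \<Rightarrow> ('a::ab_group_add) topology \<Rightarrow> ('g \<Rightarrow> 'a \<Rightarrow> 'a)
   \<Rightarrow> nat \<Rightarrow> (nat \<Rightarrow> (nat \<Rightarrow> 'g) \<Rightarrow> (nat \<Rightarrow> 'g) \<Rightarrow> 'a) set" where
  "Tot G T TA act n = {F. (\<forall>p\<le>n. F p \<in> A_lck_fixed G T TA act p (n - p)) \<and> (\<forall>p>n. F p = 0)}"

definition d_Tot :: "('g, 'b) monoid_scheme \<Rightarrow> nat
   \<Rightarrow> (nat \<Rightarrow> (nat \<Rightarrow> 'g) \<Rightarrow> (nat \<Rightarrow> 'g) \<Rightarrow> 'a::ab_group_add) \<Rightarrow> (nat \<Rightarrow> (nat \<Rightarrow> 'g) \<Rightarrow> (nat \<Rightarrow> 'g) \<Rightarrow> 'a)" where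
  "d_Tot G n F = (\<lambda>p. if p \<le> Suc n then
       (if 0 < p then d_h G (p - 1) (n - (p - 1)) (F (p - 1)) else 0)
     + (if p \<le> n then d_v G p (n - p) (F p) else 0)
     else 0)"

definition j_hk :: "('g, 'b) monoid_scheme \<Rightarrow> nat \<Rightarrow> ((nat \<Rightarrow> 'g) \<Rightarrow> 'a::ab_group_add)
   \<Rightarrow> (nat \<Rightarrow> (nat \<Rightarrow> 'g) \<Rightarrow> (nat \<Rightarrow> 'g) \<Rightarrow> 'a)" where
  "j_hk G n f = (\<lambda>p x y. if p = 0 \<and> x \<in> tuples G 0 \<and> y \<in> tuples G n then f y else 0)"

text \<open>A cochain complex is given by its groups of cochains K n (subgroups of an ambient
  abelian group) and differentials \<delta> n : K n \<rightarrow> K (n+1).\<close>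
definition cocycles :: "(nat \<Rightarrow> 'c set) \<Rightarrow> (nat \<Rightarrow> 'c \<Rightarrow> 'c::ab_group_add) \<Rightarrow> nat \<Rightarrow> 'c set" where
  "cocycles K \<delta> n = {c \<in> K n. \<delta> n c = 0}"

definition coboundaries :: "(nat \<Rightarrow> 'c set) \<Rightarrow> (nat \<Rightarrow> 'c \<Rightarrow> 'c::ab_group_add) \<Rightarrow> nat \<Rightarrow> 'c set" where
  "coboundaries K \<delta> n = (if n = 0 then {0} else \<delta> (n - 1) ` K (n - 1))"

text \<open>\<phi> is a cochain map and the induced map H^n(K) = Z^n/B^n \<rightarrow> H^n(K') = Z'^n/B'^n,
  [c] \<mapsto> [\<phi> c], is bijective for every n (surjective; injective = trivial kernel).\<close>
definition cohomology_iso ::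
  "(nat \<Rightarrow> 'c set) \<Rightarrow> (nat \<Rightarrow> 'c \<Rightarrow> 'c::ab_group_add)
   \<Rightarrow> (nat \<Rightarrow> 'd set) \<Rightarrow> (nat \<Rightarrow> 'd \<Rightarrow> 'd::ab_group_add) \<Rightarrow> (nat \<Rightarrow> 'c \<Rightarrow> 'd) \<Rightarrow> bool" where
  "cohomology_iso K \<delta> K' \<delta>' \<phi> \<longleftrightarrow>
     (\<forall>n. \<forall>c\<in>K n. \<phi> n c \<in> K' n \<and> \<delta>' n (\<phi> n c) = \<phi> (Suc n) (\<delta> n c)) \<and>
     (\<forall>n. \<forall>z\<in>cocycles K' \<delta>' n. \<exists>c\<in>cocycles K \<delta> n. z - \<phi> n c \<in> coboundaries K' \<delta>' n) \<and>
     (\<forall>n. \<forall>c\<in>cocycles K \<delta> n. \<phi> n c \<in> coboundaries K' \<delta>' n \<longrightarrow> c \<in> coboundaries K \<delta> n)"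

end

theory Submission
  imports Defs
begin


lemma topspace_kify[simp]: "topspace (kify X) = topspace X"
proof -
  have "openin (subtopology X K) (K \<inter> topspace X)" if "compactin X K" for K
  proof -
    have "K \<inter> topspace X = topspace (subtopology X K)"
      using compactin_subset_topspace[OF that] by (auto simp: topspace_subtopology)
    then show ?thesis by (metis openin_topspace)
  qed
  then have "openin (kify X) (topspace X)"
    unfolding openin_kify by blast
  moreover have "\<And>U. openin (kify X) U \<Longrightarrow> U \<subseteq> topspace X" unfolding openin_kify by blast
  ultimately show ?thesis
    by (meson openin_subset openin_topspace subset_antisym)
qed

lemma openin_kifyI: "openin X U \<Longrightarrow> openin (kify X) U"
  unfolding openin_kify by (simp add: openin_subset openin_subtopology_Int2)

lemma continuous_map_kify_id: "continuous_map (kify X) X id"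
  unfolding continuous_map_def
proof (intro conjI allI impI)
  show "id \<in> topspace (kify X) \<rightarrow> topspace X" unfolding topspace_kify by (rule funcsetI) (simp only: id_apply)
  fix U assume U: "openin X U"
  have "{x \<in> topspace (kify X). id x \<in> U} = U" unfolding topspace_kify id_apply using openin_subset[OF U] by blast
  then show "openin (kify X) {x \<in> topspace (kify X). id x \<in> U}" using openin_kifyI[OF U] by (simp only:)
qed

lemma subtopology_kify: assumes "compactin X K" shows "subtopology (kify X) K = subtopology X K"
  unfolding topology_eq
proof (intro allI iffI)
  fix S assume "openin (subtopology (kify X) K) S"
  then obtain U where U: "openin (kify X) U" "S = U \<inter> K" unfolding openin_subtopology by blast
  then have "openin (subtopology X K) (K \<inter> U)" using assms unfolding openin_kify by blast
  then show "openin (subtopology X K) S" using U(2) by (metis inf_commute)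
next
  fix S assume "openin (subtopology X K) S"
  then obtain U where U: "openin X U" "S = U \<inter> K" unfolding openin_subtopology by blast
  then show "openin (subtopology (kify X) K) S" unfolding openin_subtopology using openin_kifyI by blast
qed

lemma compactin_kify[simp]: "compactin (kify X) K \<longleftrightarrow> compactin X K"
proof
  assume "compactin (kify X) K"
  from image_compactin[OF this continuous_map_kify_id] show "compactin X K" by (simp only: image_id id_apply)
next
  assume a: "compactin X K"
  have "K \<subseteq> topspace X \<and> compact_space (subtopology X K)" using a by (simp only: compactin_subspace)
  then show "compactin (kify X) K"
    by (simp only: compactin_subspace[of "kify X" K] subtopology_kify[OF a] topspace_kify)
qed

lemma kify_kify[simp]: "kify (kify X) = kify X"
  unfolding topology_eq openin_kify[of "kify X"] openin_kify[of X] topspace_kify compactin_kify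
  by (simp add: subtopology_kify)

lemma continuous_map_kify:
  assumes f: "continuous_map X Y f" shows "continuous_map (kify X) (kify Y) f"
  unfolding continuous_map_def
proof (intro conjI allI impI)
  show "f \<in> topspace (kify X) \<rightarrow> topspace (kify Y)" using f unfolding topspace_kify by (rule continuous_map_funspace)
  fix U assume U: "openin (kify Y) U"
  show "openin (kify X) {x \<in> topspace (kify X). f x \<in> U}"
    unfolding openin_kify
  proof (intro conjI allI impI)
    show "{x \<in> topspace (kify X). f x \<in> U} \<subseteq> topspace X" unfolding topspace_kify by (rule Collect_subset)
    fix K assume K: "compactin X K"
    have fK: "compactin Y (f ` K)" using image_compactin[OF K f] .
    then have "openin (subtopology Y (f ` K)) (f ` K \<inter> U)" using U unfolding openin_kify by blast
    then obtain U' where U': "openin Y U'" "f ` K \<inter> U = U' \<inter> f ` K" by (auto simp: openin_subtopology)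
    have KX: "K \<subseteq> topspace X" using K compactin_subset_topspace by blast
    have "K \<inter> {x \<in> topspace (kify X). f x \<in> U} = K \<inter> {x \<in> topspace X. f x \<in> U'}"
    proof (intro equalityI subsetI)
      fix x assume "x \<in> K \<inter> {x \<in> topspace (kify X). f x \<in> U}"
      then have "x \<in> K" "x \<in> topspace X" "f x \<in> f ` K \<inter> U" by auto
      then show "x \<in> K \<inter> {x \<in> topspace X. f x \<in> U'}" using U'(2) by blast
    next
      fix x assume "x \<in> K \<inter> {x \<in> topspace X. f x \<in> U'}"
      then have "x \<in> K" "x \<in> topspace X" "f x \<in> U' \<inter> f ` K" by auto
      then show "x \<in> K \<inter> {x \<in> topspace (kify X). f x \<in> U}" using U'(2) by auto
    qed
    moreover have "openin X {x \<in> topspace X. f x \<in> U'}" using f U' unfolding continuous_map_def by blast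
    ultimately show "openin (subtopology X K) (K \<inter> {x \<in> topspace (kify X). f x \<in> U})"
      by (metis openin_subtopology_Int2)
  qed
qed

lemma kify_prod_kify: "kify (prod_topology (kify X) (kify Y)) = kify (prod_topology X Y)"
proof -
  let ?P1 = "prod_topology (kify X) (kify Y)" and ?P2 = "prod_topology X Y"
  have c1: "continuous_map ?P1 X (id \<circ> fst)"
    by (rule continuous_map_compose[OF continuous_map_fst continuous_map_kify_id])
  have c2: "continuous_map ?P1 Y (id \<circ> snd)"
    by (rule continuous_map_compose[OF continuous_map_snd continuous_map_kify_id])
  have idc: "continuous_map ?P1 ?P2 id"
    unfolding continuous_map_pairwise using c1 c2 by simp
  have sub: "subtopology ?P1 K = subtopology ?P2 K" if K: "compactin ?P2 K" for K
  proof -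
    have A: "compactin X (fst ` K)" and B: "compactin Y (snd ` K)"
      using image_compactin[OF K continuous_map_fst] image_compactin[OF K continuous_map_snd] by auto
    have KAB: "K \<subseteq> fst ` K \<times> snd ` K"
    proof
      fix z assume z: "z \<in> K"
      have "fst z \<in> fst ` K" "snd z \<in> snd ` K" using z by (rule imageI)+
      then show "z \<in> fst ` K \<times> snd ` K" by (simp add: mem_Times_iff)
    qed
    have "subtopology ?P1 (fst ` K \<times> snd ` K) = subtopology ?P2 (fst ` K \<times> snd ` K)"
      by (simp only: subtopology_Times subtopology_kify A B)
    then show ?thesis
      using subtopology_subtopology[of ?P1 "fst ` K \<times> snd ` K" K] subtopology_subtopology[of ?P2 "fst ` K \<times> snd ` K" K]
        Int_absorb1[OF KAB] by simp
  qed
  have comp: "compactin ?P1 K \<longleftrightarrow> compactin ?P2 K" for K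
  proof
    assume "compactin ?P1 K" from image_compactin[OF this idc] show "compactin ?P2 K" by simp
  next
    assume K: "compactin ?P2 K"
    then show "compactin ?P1 K" 
      by (simp only: compactin_subspace[of ?P1 K] compactin_subspace[of ?P2 K] sub[OF K] topspace_prod_topology topspace_kify)
  qed
  show ?thesis
    unfolding topology_eq openin_kify topspace_prod_topology topspace_kify by (simp add: comp sub)
qed


definition sgi :: "nat \<Rightarrow> 'a::ab_group_add \<Rightarrow> 'a" where
  "sgi i a = (if even i then a else - a)"

lemma sgn_sum_sgi: "sgn_sum m t = (\<Sum>i\<le>m. sgi i (t i))"
  by (simp add: sgn_sum_def sgi_def)

lemma sgi_add: "sgi i (a + b) = sgi i a + sgi i b" by (simp add: sgi_def)
lemma sgi_minus: "sgi i (- a) = - sgi i a" by (simp add: sgi_def)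
lemma sgi_sum: "sgi i (\<Sum>j\<in>J. f j) = (\<Sum>j\<in>J. sgi i (f j))"
  by (simp add: sgi_def sum_negf)
lemma sgi_sgi: "sgi i (sgi j a) = sgi (i + j) a" by (simp add: sgi_def)
lemma sgi_Suc: "sgi (Suc i) a = - sgi i a" by (simp add: sgi_def)
lemma sgi_0[simp]: "sgi i 0 = 0" by (simp add: sgi_def)

lemma sgn_sum_Suc: "sgn_sum (Suc m) t = t 0 - sgn_sum m (\<lambda>i. t (Suc i))"
  unfolding sgn_sum_sgi sum.atMost_Suc_shift sgi_Suc sum_negf by (simp add: sgi_def)

lemma sgn_sum_add: "sgn_sum m (\<lambda>i. a i + b i) = sgn_sum m a + sgn_sum m b"
  unfolding sgn_sum_sgi by (simp add: sgi_add sum.distrib)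
lemma sgn_sum_uminus: "sgn_sum m (\<lambda>i. - a i) = - sgn_sum m a"
  unfolding sgn_sum_sgi by (simp add: sgi_minus sum_negf)
lemma sgn_sum_zero[simp]: "sgn_sum m (\<lambda>i. 0) = 0"
  unfolding sgn_sum_sgi by simp

lemma sgn_sum_swap: "sgn_sum m (\<lambda>i. sgn_sum n (\<lambda>j. t i j)) = sgn_sum n (\<lambda>j. sgn_sum m (\<lambda>i. t i j))"
  unfolding sgn_sum_sgi sgi_sum sgi_sgi
  by (subst sum.swap) (simp add: add.commute)

lemma omit_omit:
  assumes "j < i" shows "omit N j (omit (Suc N) i x) = omit N (i - 1) (omit (Suc N) j x)"
  using assms unfolding omit_def by (auto simp: fun_eq_iff)

lemma dd_sum: "sgn_sum (Suc N) (\<lambda>i. sgn_sum N (\<lambda>j. f (omit N j (omit (Suc N) i x)))) = (0::'a::ab_group_add)"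
proof -
  define g where "g = (\<lambda>(i,j). sgi (i + j) (f (omit N j (omit (Suc N) i x)) :: 'a))"
  have "sgn_sum (Suc N) (\<lambda>i. sgn_sum N (\<lambda>j. f (omit N j (omit (Suc N) i x)))) = (\<Sum>z\<in>{..Suc N} \<times> {..N}. g z)"
    unfolding sgn_sum_sgi sgi_sum sgi_sgi g_def sum.cartesian_product by simp
  also have "\<dots> = (\<Sum>z\<in>({..Suc N} \<times> {..N} \<inter> {z. snd z < fst z}). g z) + (\<Sum>z\<in>({..Suc N} \<times> {..N} - {z. snd z < fst z}). g z)"
    by (rule sum.Int_Diff) simp
  also have "(\<Sum>z\<in>({..Suc N} \<times> {..N} - {z. snd z < fst z}). g z) = (\<Sum>z\<in>({..Suc N} \<times> {..N} \<inter> {z. snd z < fst z}). - g z)"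
  proof (rule sum.reindex_bij_witness[where i = "\<lambda>(i,j). (j, i - 1)" and j = "\<lambda>(a,b). (Suc b, a)"])
    fix z assume "z \<in> ({..Suc N} \<times> {..N} - {z. snd z < fst z})"
    then obtain a b where z: "z = (a,b)" "a \<le> b" "b \<le> N" by auto
    have "omit N a (omit (Suc N) (Suc b) x) = omit N b (omit (Suc N) a x)"
      using omit_omit[of a "Suc b" N x] z by simp
    then show "- g (case z of (a, b) \<Rightarrow> (Suc b, a)) = g z"
      using z by (simp add: g_def sgi_def)
  qed auto
  finally show ?thesis by (simp add: sum_negf)
qed


definition cons0 :: "'g \<Rightarrow> (nat \<Rightarrow> 'g) \<Rightarrow> (nat \<Rightarrow> 'g)" where
  "cons0 a x = (\<lambda>j. case j of 0 \<Rightarrow> a | Suc k \<Rightarrow> x k)"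
definition e0 :: "'g \<Rightarrow> (nat \<Rightarrow> 'g)" where "e0 a = cons0 a (\<lambda>_. undefined)"

definition sA :: "('g, 'b) monoid_scheme \<Rightarrow> nat \<Rightarrow> nat
   \<Rightarrow> ((nat \<Rightarrow> 'g) \<Rightarrow> (nat \<Rightarrow> 'g) \<Rightarrow> 'a::ab_group_add) \<Rightarrow> ((nat \<Rightarrow> 'g) \<Rightarrow> (nat \<Rightarrow> 'g) \<Rightarrow> 'a)" where
  "sA G p q F = (\<lambda>x y. if x \<in> tuples G p \<and> y \<in> tuples G q then F (cons0 (y 0) x) y else 0)"
definition sC :: "('g, 'b) monoid_scheme \<Rightarrow> nat
   \<Rightarrow> ((nat \<Rightarrow> 'g) \<Rightarrow> (nat \<Rightarrow> 'g) \<Rightarrow> 'a::ab_group_add) \<Rightarrow> ((nat \<Rightarrow> 'g) \<Rightarrow> 'a)" where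
  "sC G q F = (\<lambda>y. if y \<in> tuples G q then F (e0 (y 0)) y else 0)"
definition jA :: "('g, 'b) monoid_scheme \<Rightarrow> nat
   \<Rightarrow> ((nat \<Rightarrow> 'g) \<Rightarrow> 'a::ab_group_add) \<Rightarrow> ((nat \<Rightarrow> 'g) \<Rightarrow> (nat \<Rightarrow> 'g) \<Rightarrow> 'a)" where
  "jA G q c = (\<lambda>x y. if x \<in> tuples G 0 \<and> y \<in> tuples G q then c y else 0)"

lemma mem_tuples: "x \<in> tuples G n \<longleftrightarrow> (\<forall>j\<le>n. x j \<in> carrier G) \<and> (\<forall>j>n. x j = undefined)"
  unfolding tuples_def PiE_def extensional_def Pi_def by auto

lemma cons0_tuples: "x \<in> tuples G p \<Longrightarrow> a \<in> carrier G \<Longrightarrow> cons0 a x \<in> tuples G (Suc p)"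
  unfolding mem_tuples cons0_def by (auto split: nat.split)

lemma e0_tuples: "a \<in> carrier G \<Longrightarrow> e0 a \<in> tuples G 0"
  unfolding mem_tuples e0_def cons0_def by (auto split: nat.split)

lemma omit_tuples: "x \<in> tuples G (Suc n) \<Longrightarrow> omit (Suc n) i x \<in> tuples G n"
  unfolding mem_tuples omit_def by auto

lemma tuples_carrier: "x \<in> tuples G n \<Longrightarrow> j \<le> n \<Longrightarrow> x j \<in> carrier G"
  unfolding mem_tuples by auto

lemma omit_cons0_0: "x \<in> tuples G n \<Longrightarrow> omit (Suc n) 0 (cons0 a x) = x"
  unfolding mem_tuples omit_def cons0_def by (auto simp: fun_eq_iff not_less)

lemma omit_cons0_Suc: "omit (Suc n) (Suc i) (cons0 a x) = cons0 a (omit n i x)"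
  unfolding omit_def cons0_def by (auto simp: fun_eq_iff split: nat.split)

lemma omit_0_0: "omit 0 0 x = (\<lambda>_. undefined)"
  unfolding omit_def by auto

lemma sgn_sum_0[simp]: "sgn_sum 0 t = t 0" by (simp add: sgn_sum_def)

lemma dh_sA:
  assumes supp: "\<And>x y. \<not> (x \<in> tuples G (Suc p) \<and> y \<in> tuples G q) \<Longrightarrow> F x y = 0"
    and cl: "d_h G (Suc p) q F = 0"
  shows "d_h G p q (sA G p q F) = F"
proof (intro ext)
  fix x y
  show "d_h G p q (sA G p q F) x y = F x y"
  proof (cases "x \<in> tuples G (Suc p) \<and> y \<in> tuples G q")
    case True
    then have y0: "y 0 \<in> carrier G" using tuples_carrier[of y G q 0] by simp
    have cx: "cons0 (y 0) x \<in> tuples G (Suc (Suc p))" using cons0_tuples[of x G "Suc p" "y 0"] True y0 by simp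
    have "0 = d_h G (Suc p) q F (cons0 (y 0) x) y" using cl by simp
    also have "\<dots> = sgn_sum (Suc (Suc p)) (\<lambda>i. F (omit (Suc (Suc p)) i (cons0 (y 0) x)) y)"
      using cx True by (simp add: d_h_def)
    also have "\<dots> = F x y - sgn_sum (Suc p) (\<lambda>i. F (cons0 (y 0) (omit (Suc p) i x)) y)"
      by (simp only: sgn_sum_Suc omit_cons0_0[of x G "Suc p"] True omit_cons0_Suc)
    finally have "F x y - sgn_sum (Suc p) (\<lambda>i. F (cons0 (y 0) (omit (Suc p) i x)) y) = 0" by simp
    moreover have "d_h G p q (sA G p q F) x y = sgn_sum (Suc p) (\<lambda>i. F (cons0 (y 0) (omit (Suc p) i x)) y)"
      using True by (simp add: d_h_def sA_def omit_tuples)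
    ultimately show ?thesis by simp
  next
    case False
    have "F x y = 0" using supp False by blast
    then show ?thesis using False unfolding d_h_def by auto
  qed
qed

lemma dh0_sC:
  assumes supp: "\<And>x y. \<not> (x \<in> tuples G 0 \<and> y \<in> tuples G q) \<Longrightarrow> F x y = 0"
    and cl: "d_h G 0 q F = 0"
  shows "jA G q (sC G q F) = F"
proof (intro ext)
  fix x y
  show "jA G q (sC G q F) x y = F x y"
  proof (cases "x \<in> tuples G 0 \<and> y \<in> tuples G q")
    case True
    then have y0: "y 0 \<in> carrier G" using tuples_carrier[of y G q 0] by simp
    have cx: "cons0 (y 0) x \<in> tuples G (Suc 0)" using cons0_tuples[of x G 0 "y 0"] True y0 by simp
    have "0 = d_h G 0 q F (cons0 (y 0) x) y" using cl by simp
    also have "\<dots> = sgn_sum (Suc 0) (\<lambda>i. F (omit (Suc 0) i (cons0 (y 0) x)) y)"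
      using cx True by (simp add: d_h_def)
    also have "\<dots> = F x y - F (e0 (y 0)) y"
      by (simp only: sgn_sum_Suc sgn_sum_0 omit_cons0_0[of x G 0] True omit_cons0_Suc omit_0_0 e0_def)
    finally have "F x y - F (e0 (y 0)) y = 0" by simp
    then show ?thesis using True by (simp add: jA_def sC_def)
  next
    case False
    have "F x y = 0" using supp False by blast
    then show ?thesis using False unfolding jA_def by auto
  qed
qed

lemma dv_jA: "d_v G 0 q (jA G q c) = jA G (Suc q) (d_C G q c)"
  by (auto simp: fun_eq_iff d_v_def jA_def d_C_def omit_tuples)

lemma dh_jA: "d_h G 0 q (jA G q c) = 0"
  by (auto simp: fun_eq_iff d_h_def jA_def sgn_sum_Suc omit_tuples)

lemma dh_add: "d_h G p q (F + F') = d_h G p q F + d_h G p q F'"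
  by (simp add: fun_eq_iff d_h_def sgn_sum_add)
lemma dh_uminus: "d_h G p q (- F) = - d_h G p q F"
  by (simp add: fun_eq_iff d_h_def sgn_sum_uminus)
lemma dh_zero[simp]: "d_h G p q 0 = 0"
  by (simp add: fun_eq_iff d_h_def)
lemma dv_add: "d_v G p q (F + F') = d_v G p q F + d_v G p q F'"
  by (simp add: fun_eq_iff d_v_def sgn_sum_add)
lemma dv_uminus: "d_v G p q (- F) = - d_v G p q F"
  by (simp add: fun_eq_iff d_v_def sgn_sum_uminus)
lemma dv_zero[simp]: "d_v G p q 0 = 0"
  by (simp add: fun_eq_iff d_v_def)

lemma dh_dh: "d_h G (Suc p) q (d_h G p q F) = 0"
proof (intro ext)
  fix x y
  show "d_h G (Suc p) q (d_h G p q F) x y = 0 x y"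
    using dd_sum[of "Suc p" "\<lambda>z. F z y" x]
    by (auto simp: d_h_def omit_tuples)
qed

lemma dv_dv: "d_v G p (Suc q) (d_v G p q F) = 0"
proof (intro ext)
  fix x y
  show "d_v G p (Suc q) (d_v G p q F) x y = 0 x y"
    using dd_sum[of "Suc q" "\<lambda>z. F x z" y]
    by (auto simp: d_v_def omit_tuples sgn_sum_uminus)
qed

lemma dh_dv: "d_h G p (Suc q) (d_v G p q F) + d_v G (Suc p) q (d_h G p q F) = 0"
proof (intro ext)
  fix x y
  show "(d_h G p (Suc q) (d_v G p q F) + d_v G (Suc p) q (d_h G p q F)) x y = 0 x y"
    using sgn_sum_swap[of "Suc p" "Suc q" "\<lambda>i j. F (omit (Suc p) i x) (omit (Suc q) j y)"]
    by (auto simp: d_v_def d_h_def omit_tuples sgn_sum_uminus)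
qed


lemma j_hk_eq: "j_hk G n c = (\<lambda>p. if p = 0 then jA G n c else 0)"
  unfolding fun_eq_iff by (simp add: j_hk_def jA_def)

lemma dTot_add: "d_Tot G n (E + E') = d_Tot G n E + d_Tot G n E'"
proof (rule ext)
  fix p show "d_Tot G n (E + E') p = (d_Tot G n E + d_Tot G n E') p"
    by (cases "p \<le> Suc n"; cases "0 < p"; cases "p \<le> n") (simp_all add: d_Tot_def dh_add dv_add algebra_simps)
qed
lemma dTot_uminus: "d_Tot G n (- E) = - d_Tot G n E"
proof (rule ext)
  fix p show "d_Tot G n (- E) p = (- d_Tot G n E) p"
    by (cases "p \<le> Suc n"; cases "0 < p"; cases "p \<le> n") (simp_all add: d_Tot_def dh_uminus dv_uminus)
qed
lemma dTot_diff: "d_Tot G n (E - E') = d_Tot G n E - d_Tot G n E'"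
  unfolding diff_conv_add_uminus dTot_add dTot_uminus ..
lemma dTot_zero[simp]: "d_Tot G n 0 = 0"
proof (rule ext)
  fix p show "d_Tot G n 0 p = 0 p"
    by (simp add: d_Tot_def)
qed

lemma dv_dv': "q2 = Suc q \<Longrightarrow> d_v G p q2 (d_v G p q F) = 0"
  by (simp add: dv_dv)

lemma dTot_dTot: "d_Tot G (Suc n) (d_Tot G n E) = 0"
proof (rule ext)
  fix p
  consider "p = 0" | P where "p = Suc P" "P \<le> n" | "p = Suc (Suc n)" | "p > Suc (Suc n)"
    by (cases p) (auto, arith)
  then show "d_Tot G (Suc n) (d_Tot G n E) p = 0 p"
  proof cases
    case 1
    then show ?thesis by (simp add: d_Tot_def dv_dv)
  next
    case 2
    note P = 2
    have e1: "d_Tot G n E P = (if 0 < P then d_h G (P-1) (n-(P-1)) (E (P-1)) else 0) + d_v G P (n-P) (E P)"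
      using P by (simp add: d_Tot_def)
    have e2: "d_Tot G n E (Suc P) = d_h G P (n-P) (E P) + (if Suc P \<le> n then d_v G (Suc P) (n - Suc P) (E (Suc P)) else 0)"
      using P by (simp add: d_Tot_def)
    have L: "d_Tot G (Suc n) (d_Tot G n E) p = d_h G P (Suc n - P) (d_Tot G n E P) + d_v G (Suc P) (Suc n - Suc P) (d_Tot G n E (Suc P))"
      using P by (simp add: d_Tot_def)
    have t1: "d_h G P (Suc n - P) (if 0 < P then d_h G (P-1) (n-(P-1)) (E (P-1)) else 0) = 0"
    proof (cases P)
      case (Suc P') then show ?thesis using dh_dh[of G P' "n - P'"] by simp
    qed simp
    have t2: "d_v G (Suc P) (Suc n - Suc P) (if Suc P \<le> n then d_v G (Suc P) (n - Suc P) (E (Suc P)) else 0) = 0"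
    proof (cases "Suc P \<le> n")
      case True then show ?thesis by (simp add: dv_dv')
    qed simp
    have t3: "d_h G P (Suc n - P) (d_v G P (n-P) (E P)) + d_v G (Suc P) (Suc n - Suc P) (d_h G P (n-P) (E P)) = 0"
      using dh_dv[of G P "n - P" "E P"] P by (simp add: Suc_diff_le)
    show ?thesis
      unfolding L e1 e2 dh_add dv_add using t1 t2 t3
      by (simp add: algebra_simps)
  next
    case 3
    then show ?thesis by (simp add: d_Tot_def dh_dh)
  next
    case 4
    then show ?thesis by (simp add: d_Tot_def)
  qed
qed

lemma dTot_j: "d_Tot G n (j_hk G n c) = j_hk G (Suc n) (d_C G n c)"
proof (rule ext)
  fix p
  show "d_Tot G n (j_hk G n c) p = j_hk G (Suc n) (d_C G n c) p"
  proof (cases p)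
    case 0 then show ?thesis by (simp add: d_Tot_def j_hk_eq dv_jA)
  next
    case (Suc P)
    then show ?thesis by (cases P) (simp_all add: d_Tot_def j_hk_eq dh_jA)
  qed
qed


definition PQ :: "('g, 'b) monoid_scheme \<Rightarrow> 'g topology \<Rightarrow> 'g set \<Rightarrow> nat \<Rightarrow> nat \<Rightarrow> ((nat \<Rightarrow> 'g) \<times> (nat \<Rightarrow> 'g)) topology" where
  "PQ G T U p q = prod_topology (tuple_top T p) (subtopology (tuple_top T q) (Gamma G U q))"

lemma Gamma_sub: "Gamma G U q \<subseteq> tuples G q" unfolding Gamma_def by auto

lemma Gamma_mono: "U' \<subseteq> U \<Longrightarrow> Gamma G U' q \<subseteq> Gamma G U q" unfolding Gamma_def by auto

lemma omit_Gamma: "y \<in> Gamma G U (Suc q) \<Longrightarrow> omit (Suc q) i y \<in> Gamma G U q"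
proof -
  assume y: "y \<in> Gamma G U (Suc q)"
  have t: "omit (Suc q) i y \<in> tuples G q" using y omit_tuples[of y G q i] unfolding Gamma_def by simp
  define idx where "idx k = (if k < i then k else Suc k)" for k
  have e: "omit (Suc q) i y k = y (idx k)" "idx k \<le> Suc q" if "k \<le> q" for k
    using that unfolding omit_def idx_def by auto
  have "inv\<^bsub>G\<^esub> (omit (Suc q) i y k) \<otimes>\<^bsub>G\<^esub> omit (Suc q) i y l \<in> U" if "k \<le> q" "l \<le> q" for k l
    using y e[OF that(1)] e[OF that(2)] unfolding Gamma_def by simp
  then show ?thesis using t unfolding Gamma_def by simp
qed

lemma A_cont_iff:
  "continuous_map (kprod (kify (tuple_top T p)) (kify (subtopology (tuple_top T q) (Gamma G U q)))) TA h
   \<longleftrightarrow> continuous_map (kify (PQ G T U p q)) TA h"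
  unfolding kprod_def PQ_def kify_prod_kify ..

locale kgm =
  fixes G :: "('g, 'b) monoid_scheme" and T :: "'g topology"
    and TA :: "('a::ab_group_add) topology" and act :: "'g \<Rightarrow> 'a \<Rightarrow> 'a"
  assumes kg: "k_group G T" and cm: "cont_G_module G T TA act"
begin

lemma grp: "group G" using kg unfolding k_group_def by blast
lemma topT: "topspace T = carrier G" using kg unfolding k_group_def by blast
lemma abt: "ab_top_group TA" using cm unfolding cont_G_module_def by blast
lemma topTA: "topspace TA = UNIV" using abt unfolding ab_top_group_def by blast
lemma act_add: "g \<in> carrier G \<Longrightarrow> act g (a + b) = act g a + act g b"
  using cm unfolding cont_G_module_def by blast

lemma act_zero: "g \<in> carrier G \<Longrightarrow> act g 0 = 0"
  using act_add[of g 0 0] by simp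
lemma act_uminus: "g \<in> carrier G \<Longrightarrow> act g (- a) = - act g a"
  using act_add[of g a "- a"] act_zero[of g] by (simp add: eq_neg_iff_add_eq_0 add.commute)
lemma act_sgi: "g \<in> carrier G \<Longrightarrow> act g (sgi i a) = sgi i (act g a)"
  by (simp add: sgi_def act_uminus)
lemma act_sum: "g \<in> carrier G \<Longrightarrow> act g (\<Sum>i\<in>I. f i) = (\<Sum>i\<in>I. act g (f i))"
proof (induction I rule: infinite_finite_induct)
  case (insert x F) then show ?case by (simp add: act_add)
qed (simp_all add: act_zero)
lemma act_sgn_sum: "g \<in> carrier G \<Longrightarrow> act g (sgn_sum m t) = sgn_sum m (\<lambda>i. act g (t i))"
  unfolding sgn_sum_sgi by (simp add: act_sum act_sgi)

lemma topspace_tuple_top[simp]: "topspace (tuple_top T n) = tuples G n"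
  unfolding tuple_top_def tuples_def by (simp add: topT)

lemma topspace_PQ[simp]: "topspace (PQ G T U p q) = tuples G p \<times> Gamma G U q"
  unfolding PQ_def using Gamma_sub[of G U q] by auto

lemma cont_add: "continuous_map X TA f \<Longrightarrow> continuous_map X TA g \<Longrightarrow> continuous_map X TA (\<lambda>x. f x + g x)"
proof -
  assume f: "continuous_map X TA f" and g: "continuous_map X TA g"
  have a: "continuous_map (prod_topology TA TA) TA (\<lambda>(a, b). a + b)"
    using abt unfolding ab_top_group_def by blast
  from continuous_map_compose[OF continuous_map_pairedI[OF f g] a]
  show ?thesis by (simp add: o_def)
qed
lemma cont_uminus: "continuous_map X TA f \<Longrightarrow> continuous_map X TA (\<lambda>x. - f x)"
proof -
  assume f: "continuous_map X TA f"
  have a: "continuous_map TA TA uminus"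
    using abt unfolding ab_top_group_def by blast
  from continuous_map_compose[OF f a]
  show ?thesis by (simp add: o_def)
qed
lemma cont_zero: "continuous_map X TA (\<lambda>x. 0)"
  by (simp add: topTA)
lemma cont_sum: "(\<And>i. i \<in> I \<Longrightarrow> continuous_map X TA (f i)) \<Longrightarrow> continuous_map X TA (\<lambda>x. \<Sum>i\<in>I. f i x)"
proof (induction I rule: infinite_finite_induct)
  case (insert x F) then show ?case by (simp add: cont_add)
qed (simp_all add: topTA)
lemma cont_sgi: "continuous_map X TA f \<Longrightarrow> continuous_map X TA (\<lambda>x. sgi i (f x))"
  by (cases "even i") (simp_all add: sgi_def cont_uminus)
lemma cont_sgn_sum: "(\<And>i. continuous_map X TA (f i)) \<Longrightarrow> continuous_map X TA (\<lambda>x. sgn_sum m (\<lambda>i. f i x))"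
  unfolding sgn_sum_sgi by (rule cont_sum) (rule cont_sgi, simp)

lemma proj_fst: "k \<le> p \<Longrightarrow> continuous_map (PQ G T U p q) T (\<lambda>z. fst z k)"
  using continuous_map_compose[OF continuous_map_fst continuous_map_product_projection[of k "{..p}" "\<lambda>_. T"]]
  unfolding PQ_def tuple_top_def by (simp add: o_def)
lemma proj_snd: "k \<le> q \<Longrightarrow> continuous_map (PQ G T U p q) T (\<lambda>z. snd z k)"
  using continuous_map_compose[OF continuous_map_snd
      continuous_map_from_subtopology[OF continuous_map_product_projection[of k "{..q}" "\<lambda>_. T"]]]
  unfolding PQ_def tuple_top_def by (simp add: o_def)

lemma into_tuple_top:
  assumes "\<And>z. z \<in> topspace X \<Longrightarrow> h z \<in> tuples G n"
    and "\<And>k. k \<le> n \<Longrightarrow> continuous_map X T (\<lambda>z. h z k)"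
  shows "continuous_map X (tuple_top T n) h"
  unfolding tuple_top_def continuous_map_componentwise
proof
  show "h ` topspace X \<subseteq> extensional {..n}" using assms(1) unfolding tuples_def PiE_def by auto
  show "\<forall>k\<in>{..n}. continuous_map X T (\<lambda>x. h x k)" using assms(2) by simp
qed

lemma into_PQ:
  assumes "continuous_map X (tuple_top T p) h1" "continuous_map X (tuple_top T q) h2"
    "\<And>z. z \<in> topspace X \<Longrightarrow> h2 z \<in> Gamma G U q"
  shows "continuous_map X (PQ G T U p q) (\<lambda>z. (h1 z, h2 z))"
  unfolding PQ_def
  by (rule continuous_map_pairedI[OF assms(1) continuous_map_into_subtopology[OF assms(2)]]) (use assms(3) in auto)

lemma m_sA: "continuous_map (PQ G T U p q) (PQ G T U (Suc p) q) (\<lambda>z. (cons0 (snd z 0) (fst z), snd z))"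
proof (rule into_PQ)
  show "continuous_map (PQ G T U p q) (tuple_top T (Suc p)) (\<lambda>z. cons0 (snd z 0) (fst z))"
  proof (rule into_tuple_top)
    fix z assume "z \<in> topspace (PQ G T U p q)"
    then have "fst z \<in> tuples G p" "snd z \<in> tuples G q" using Gamma_sub[of G U q] by auto
    then show "cons0 (snd z 0) (fst z) \<in> tuples G (Suc p)"
      using cons0_tuples[of "fst z" G p "snd z 0"] tuples_carrier[of "snd z" G q 0] by simp
  next
    fix k assume k: "k \<le> Suc p"
    show "continuous_map (PQ G T U p q) T (\<lambda>z. cons0 (snd z 0) (fst z) k)"
    proof (cases k)
      case 0 then show ?thesis using proj_snd[of 0 q U p] by (simp add: cons0_def)
    next
      case (Suc k') then show ?thesis using proj_fst[of k' p U q] k by (simp add: cons0_def)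
    qed
  qed
  show "continuous_map (PQ G T U p q) (tuple_top T q) snd"
    unfolding PQ_def using continuous_map_snd continuous_map_into_fulltopology by blast
  show "\<And>z. z \<in> topspace (PQ G T U p q) \<Longrightarrow> snd z \<in> Gamma G U q" by auto
qed

lemma m_dh: "continuous_map (PQ G T U (Suc p) q) (PQ G T U p q) (\<lambda>z. (omit (Suc p) i (fst z), snd z))"
proof (rule into_PQ)
  show "continuous_map (PQ G T U (Suc p) q) (tuple_top T p) (\<lambda>z. omit (Suc p) i (fst z))"
  proof (rule into_tuple_top)
    fix z assume "z \<in> topspace (PQ G T U (Suc p) q)"
    then have "fst z \<in> tuples G (Suc p)" by auto
    then show "omit (Suc p) i (fst z) \<in> tuples G p" using omit_tuples[of "fst z" G p i] by simp
  next
    fix k assume k: "k \<le> p"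
    show "continuous_map (PQ G T U (Suc p) q) T (\<lambda>z. omit (Suc p) i (fst z) k)"
    proof (cases "k < i")
      case True then show ?thesis using proj_fst[of k "Suc p" U q] k by (simp add: omit_def)
    next
      case False then show ?thesis using proj_fst[of "Suc k" "Suc p" U q] k by (simp add: omit_def)
    qed
  qed
  show "continuous_map (PQ G T U (Suc p) q) (tuple_top T q) snd"
    unfolding PQ_def using continuous_map_snd continuous_map_into_fulltopology by blast
  show "\<And>z. z \<in> topspace (PQ G T U (Suc p) q) \<Longrightarrow> snd z \<in> Gamma G U q" by auto
qed

lemma m_dv: "continuous_map (PQ G T U p (Suc q)) (PQ G T U p q) (\<lambda>z. (fst z, omit (Suc q) i (snd z)))"
proof (rule into_PQ)
  show "continuous_map (PQ G T U p (Suc q)) (tuple_top T p) fst"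
    unfolding PQ_def by (rule continuous_map_fst)
  show "continuous_map (PQ G T U p (Suc q)) (tuple_top T q) (\<lambda>z. omit (Suc q) i (snd z))"
  proof (rule into_tuple_top)
    fix z assume "z \<in> topspace (PQ G T U p (Suc q))"
    then have "snd z \<in> tuples G (Suc q)" using Gamma_sub[of G U "Suc q"] by auto
    then show "omit (Suc q) i (snd z) \<in> tuples G q" using omit_tuples[of "snd z" G q i] by simp
  next
    fix k assume k: "k \<le> q"
    show "continuous_map (PQ G T U p (Suc q)) T (\<lambda>z. omit (Suc q) i (snd z) k)"
    proof (cases "k < i")
      case True then show ?thesis using proj_snd[of k "Suc q" U p] k by (simp add: omit_def)
    next
      case False then show ?thesis using proj_snd[of "Suc k" "Suc q" U p] k by (simp add: omit_def)
    qed
  qed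
  show "\<And>z. z \<in> topspace (PQ G T U p (Suc q)) \<Longrightarrow> omit (Suc q) i (snd z) \<in> Gamma G U q"
    using omit_Gamma by auto
qed

lemma m_sC: "continuous_map (subtopology (tuple_top T q) (Gamma G U q)) (PQ G T U 0 q) (\<lambda>y. (e0 (y 0), y))"
proof (rule into_PQ)
  show "continuous_map (subtopology (tuple_top T q) (Gamma G U q)) (tuple_top T 0) (\<lambda>y. e0 (y 0))"
  proof (rule into_tuple_top)
    fix z assume "z \<in> topspace (subtopology (tuple_top T q) (Gamma G U q))"
    then have "z \<in> tuples G q" using Gamma_sub[of G U q] by auto
    then show "e0 (z 0) \<in> tuples G 0" using e0_tuples[of "z 0" G] tuples_carrier[of z G q 0] by simp
  next
    fix k assume k: "k \<le> (0::nat)"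
    then show "continuous_map (subtopology (tuple_top T q) (Gamma G U q)) T (\<lambda>z. e0 (z 0) k)"
      using continuous_map_from_subtopology[OF continuous_map_product_projection[of 0 "{..q}" "\<lambda>_. T"]]
      unfolding tuple_top_def by (simp add: e0_def cons0_def)
  qed
  show "continuous_map (subtopology (tuple_top T q) (Gamma G U q)) (tuple_top T q) (\<lambda>y. y)"
    by (simp add: continuous_map_from_subtopology)
  show "\<And>z. z \<in> topspace (subtopology (tuple_top T q) (Gamma G U q)) \<Longrightarrow> z \<in> Gamma G U q" by auto
qed

lemma m_snd: "continuous_map (PQ G T U p q) (subtopology (tuple_top T q) (Gamma G U q)) snd"
  unfolding PQ_def by (rule continuous_map_snd)

lemma m_mono: "U' \<subseteq> U \<Longrightarrow> continuous_map (PQ G T U' p q) (PQ G T U p q) (\<lambda>z. (fst z, snd z))"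
proof (rule into_PQ)
  show "continuous_map (PQ G T U' p q) (tuple_top T p) fst" unfolding PQ_def by (rule continuous_map_fst)
  show "continuous_map (PQ G T U' p q) (tuple_top T q) snd"
    unfolding PQ_def using continuous_map_snd continuous_map_into_fulltopology by blast
  show "\<And>z. U' \<subseteq> U \<Longrightarrow> z \<in> topspace (PQ G T U' p q) \<Longrightarrow> snd z \<in> Gamma G U q"
  proof -
    fix z assume "U' \<subseteq> U" "z \<in> topspace (PQ G T U' p q)"
    then show "snd z \<in> Gamma G U q" using Gamma_mono[of U' U G q] by auto
  qed
qed

end


lemma ltrans_tuples: "group G \<Longrightarrow> g \<in> carrier G \<Longrightarrow> x \<in> tuples G n \<Longrightarrow> ltrans G n g x \<in> tuples G n"
  unfolding mem_tuples ltrans_def by (auto intro: monoid.m_closed group.is_monoid)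
lemma omit_ltrans: "omit (Suc n) i (ltrans G (Suc n) g x) = ltrans G n g (omit (Suc n) i x)"
  unfolding omit_def ltrans_def by (auto simp: fun_eq_iff)
lemma cons0_ltrans: "cons0 (g \<otimes>\<^bsub>G\<^esub> a) (ltrans G p g x) = ltrans G (Suc p) g (cons0 a x)"
  unfolding cons0_def ltrans_def by (auto simp: fun_eq_iff split: nat.split)
lemma ltrans_app0: "ltrans G q g y 0 = g \<otimes>\<^bsub>G\<^esub> y 0"
  unfolding ltrans_def by simp
lemma e0_ltrans: "ltrans G 0 g (e0 a) = e0 (g \<otimes>\<^bsub>G\<^esub> a)"
  unfolding e0_def cons0_def ltrans_def by (auto simp: fun_eq_iff split: nat.split)

lemma cp_eq: "(\<lambda>(x, y). h x y) = (\<lambda>z. h (fst z) (snd z))"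
  by (simp add: fun_eq_iff)

context kgm
begin

lemma invc: "g \<in> carrier G \<Longrightarrow> inv\<^bsub>G\<^esub> g \<in> carrier G"
  using grp by (simp add: group.inv_closed)

lemma lt_tuples: "g \<in> carrier G \<Longrightarrow> x \<in> tuples G n \<Longrightarrow> ltrans G n (inv\<^bsub>G\<^esub> g) x \<in> tuples G n"
  using ltrans_tuples[OF grp invc] by blast

lemma A_fixed_iff: "F \<in> A_lck_fixed G T TA act p q \<longleftrightarrow>
   (\<forall>x y. \<not> (x \<in> tuples G p \<and> y \<in> tuples G q) \<longrightarrow> F x y = 0) \<and>
   (\<exists>U. identity_nbhd G T U \<and> continuous_map (kify (PQ G T U p q)) TA (\<lambda>(x, y). F x y)) \<and>
   (\<forall>g\<in>carrier G. \<forall>x\<in>tuples G p. \<forall>y\<in>tuples G q.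
        act g (F (ltrans G p (inv\<^bsub>G\<^esub> g) x) (ltrans G q (inv\<^bsub>G\<^esub> g) y)) = F x y)"
  unfolding A_lck_fixed_def A_lck_def A_cont_iff by blast

lemma tsub: "z \<in> topspace (kify (PQ G T U p q)) \<Longrightarrow> fst z \<in> tuples G p \<and> snd z \<in> tuples G q"
  using Gamma_sub[of G U q] by auto

lemma sA_mem:
  assumes F: "F \<in> A_lck_fixed G T TA act (Suc p) q"
  shows "sA G p q F \<in> A_lck_fixed G T TA act p q"
  unfolding A_fixed_iff
proof (intro conjI)
  show "\<forall>x y. \<not> (x \<in> tuples G p \<and> y \<in> tuples G q) \<longrightarrow> sA G p q F x y = 0"
    by (simp add: sA_def)
  obtain U where U: "identity_nbhd G T U" and Fc: "continuous_map (kify (PQ G T U (Suc p) q)) TA (\<lambda>(x, y). F x y)"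
    using F unfolding A_fixed_iff by blast
  have c: "continuous_map (kify (PQ G T U p q)) TA ((\<lambda>(x, y). F x y) \<circ> (\<lambda>z. (cons0 (snd z 0) (fst z), snd z)))"
    by (rule continuous_map_compose[OF continuous_map_kify[OF m_sA] Fc])
  have "continuous_map (kify (PQ G T U p q)) TA (\<lambda>(x, y). sA G p q F x y)"
  proof (rule continuous_map_eq[OF c])
    fix z assume "z \<in> topspace (kify (PQ G T U p q))"
    then show "((\<lambda>(x, y). F x y) \<circ> (\<lambda>z. (cons0 (snd z 0) (fst z), snd z))) z = (\<lambda>(x, y). sA G p q F x y) z"
      using tsub[of z U p q] by (cases z) (simp add: sA_def)
  qed
  then show "\<exists>U. identity_nbhd G T U \<and> continuous_map (kify (PQ G T U p q)) TA (\<lambda>(x, y). sA G p q F x y)"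
    using U by blast
  show "\<forall>g\<in>carrier G. \<forall>x\<in>tuples G p. \<forall>y\<in>tuples G q.
        act g (sA G p q F (ltrans G p (inv\<^bsub>G\<^esub> g) x) (ltrans G q (inv\<^bsub>G\<^esub> g) y)) = sA G p q F x y"
  proof (intro ballI)
    fix g x y assume g: "g \<in> carrier G" and x: "x \<in> tuples G p" and y: "y \<in> tuples G q"
    have y0: "y 0 \<in> carrier G" using tuples_carrier[OF y, of 0] by simp
    have cx: "cons0 (y 0) x \<in> tuples G (Suc p)" using cons0_tuples[OF x y0] .
    have "sA G p q F (ltrans G p (inv\<^bsub>G\<^esub> g) x) (ltrans G q (inv\<^bsub>G\<^esub> g) y)
        = F (ltrans G (Suc p) (inv\<^bsub>G\<^esub> g) (cons0 (y 0) x)) (ltrans G q (inv\<^bsub>G\<^esub> g) y)"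
      using lt_tuples[OF g x] lt_tuples[OF g y] by (simp add: sA_def ltrans_app0 cons0_ltrans)
    then show "act g (sA G p q F (ltrans G p (inv\<^bsub>G\<^esub> g) x) (ltrans G q (inv\<^bsub>G\<^esub> g) y)) = sA G p q F x y"
      using F g cx y x unfolding A_fixed_iff by (simp add: sA_def)
  qed
qed


lemma dh_mem:
  assumes F: "F \<in> A_lck_fixed G T TA act p q"
  shows "d_h G p q F \<in> A_lck_fixed G T TA act (Suc p) q"
  unfolding A_fixed_iff
proof (intro conjI)
  show "\<forall>x y. \<not> (x \<in> tuples G (Suc p) \<and> y \<in> tuples G q) \<longrightarrow> d_h G p q F x y = 0"
    by (simp add: d_h_def)
  obtain U where U: "identity_nbhd G T U" and Fc: "continuous_map (kify (PQ G T U p q)) TA (\<lambda>(x, y). F x y)"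
    using F unfolding A_fixed_iff by blast
  have ci: "continuous_map (kify (PQ G T U (Suc p) q)) TA ((\<lambda>(x, y). F x y) \<circ> (\<lambda>z. (omit (Suc p) i (fst z), snd z)))" for i
    by (rule continuous_map_compose[OF continuous_map_kify[OF m_dh] Fc])
  have c: "continuous_map (kify (PQ G T U (Suc p) q)) TA
      (\<lambda>z. sgn_sum (Suc p) (\<lambda>i. ((\<lambda>(x, y). F x y) \<circ> (\<lambda>z. (omit (Suc p) i (fst z), snd z))) z))"
    by (rule cont_sgn_sum[OF ci])
  have "continuous_map (kify (PQ G T U (Suc p) q)) TA (\<lambda>(x, y). d_h G p q F x y)"
  proof (rule continuous_map_eq[OF c])
    fix z assume "z \<in> topspace (kify (PQ G T U (Suc p) q))"
    then have "fst z \<in> tuples G (Suc p) \<and> snd z \<in> tuples G q" by (rule tsub)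
    then show "(\<lambda>z. sgn_sum (Suc p) (\<lambda>i. ((\<lambda>(x, y). F x y) \<circ> (\<lambda>z. (omit (Suc p) i (fst z), snd z))) z)) z
        = (\<lambda>(x, y). d_h G p q F x y) z"
      by (cases z) (simp add: d_h_def)
  qed
  then show "\<exists>U. identity_nbhd G T U \<and> continuous_map (kify (PQ G T U (Suc p) q)) TA (\<lambda>(x, y). d_h G p q F x y)"
    using U by blast
  show "\<forall>g\<in>carrier G. \<forall>x\<in>tuples G (Suc p). \<forall>y\<in>tuples G q.
        act g (d_h G p q F (ltrans G (Suc p) (inv\<^bsub>G\<^esub> g) x) (ltrans G q (inv\<^bsub>G\<^esub> g) y)) = d_h G p q F x y"
  proof (intro ballI)
    fix g x y assume g: "g \<in> carrier G" and x: "x \<in> tuples G (Suc p)" and y: "y \<in> tuples G q"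
    have eq: "act g (F (omit (Suc p) i (ltrans G (Suc p) (inv\<^bsub>G\<^esub> g) x)) (ltrans G q (inv\<^bsub>G\<^esub> g) y)) = F (omit (Suc p) i x) y" for i
      using F g omit_tuples[OF x, of i] y unfolding A_fixed_iff omit_ltrans by simp
    show "act g (d_h G p q F (ltrans G (Suc p) (inv\<^bsub>G\<^esub> g) x) (ltrans G q (inv\<^bsub>G\<^esub> g) y)) = d_h G p q F x y"
      using lt_tuples[OF g x] lt_tuples[OF g y] x y by (simp add: d_h_def act_sgn_sum[OF g] eq)
  qed
qed

lemma dv_mem:
  assumes F: "F \<in> A_lck_fixed G T TA act p q"
  shows "d_v G p q F \<in> A_lck_fixed G T TA act p (Suc q)"
  unfolding A_fixed_iff
proof (intro conjI)
  show "\<forall>x y. \<not> (x \<in> tuples G p \<and> y \<in> tuples G (Suc q)) \<longrightarrow> d_v G p q F x y = 0"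
    by (simp add: d_v_def)
  obtain U where U: "identity_nbhd G T U" and Fc: "continuous_map (kify (PQ G T U p q)) TA (\<lambda>(x, y). F x y)"
    using F unfolding A_fixed_iff by blast
  have ci: "continuous_map (kify (PQ G T U p (Suc q))) TA ((\<lambda>(x, y). F x y) \<circ> (\<lambda>z. (fst z, omit (Suc q) i (snd z))))" for i
    by (rule continuous_map_compose[OF continuous_map_kify[OF m_dv] Fc])
  have c0: "continuous_map (kify (PQ G T U p (Suc q))) TA
      (\<lambda>z. sgn_sum (Suc q) (\<lambda>i. ((\<lambda>(x, y). F x y) \<circ> (\<lambda>z. (fst z, omit (Suc q) i (snd z)))) z))"
    by (rule cont_sgn_sum[OF ci])
  have c: "continuous_map (kify (PQ G T U p (Suc q))) TA
      (\<lambda>z. sgi p (sgn_sum (Suc q) (\<lambda>i. ((\<lambda>(x, y). F x y) \<circ> (\<lambda>z. (fst z, omit (Suc q) i (snd z)))) z)))"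
    by (rule cont_sgi[OF c0])
  have "continuous_map (kify (PQ G T U p (Suc q))) TA (\<lambda>(x, y). d_v G p q F x y)"
  proof (rule continuous_map_eq[OF c])
    fix z assume "z \<in> topspace (kify (PQ G T U p (Suc q)))"
    then have "fst z \<in> tuples G p \<and> snd z \<in> tuples G (Suc q)" by (rule tsub)
    then show "(\<lambda>z. sgi p (sgn_sum (Suc q) (\<lambda>i. ((\<lambda>(x, y). F x y) \<circ> (\<lambda>z. (fst z, omit (Suc q) i (snd z)))) z))) z
        = (\<lambda>(x, y). d_v G p q F x y) z"
      by (cases z) (simp add: d_v_def sgi_def)
  qed
  then show "\<exists>U. identity_nbhd G T U \<and> continuous_map (kify (PQ G T U p (Suc q))) TA (\<lambda>(x, y). d_v G p q F x y)"
    using U by blast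
  show "\<forall>g\<in>carrier G. \<forall>x\<in>tuples G p. \<forall>y\<in>tuples G (Suc q).
        act g (d_v G p q F (ltrans G p (inv\<^bsub>G\<^esub> g) x) (ltrans G (Suc q) (inv\<^bsub>G\<^esub> g) y)) = d_v G p q F x y"
  proof (intro ballI)
    fix g x y assume g: "g \<in> carrier G" and x: "x \<in> tuples G p" and y: "y \<in> tuples G (Suc q)"
    have eq: "act g (F (ltrans G p (inv\<^bsub>G\<^esub> g) x) (omit (Suc q) i (ltrans G (Suc q) (inv\<^bsub>G\<^esub> g) y))) = F x (omit (Suc q) i y)" for i
      using F g omit_tuples[OF y, of i] x unfolding A_fixed_iff omit_ltrans by simp
    have "act g (d_v G p q F (ltrans G p (inv\<^bsub>G\<^esub> g) x) (ltrans G (Suc q) (inv\<^bsub>G\<^esub> g) y))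
       = act g (sgi p (sgn_sum (Suc q) (\<lambda>i. F (ltrans G p (inv\<^bsub>G\<^esub> g) x) (omit (Suc q) i (ltrans G (Suc q) (inv\<^bsub>G\<^esub> g) y)))))"
      using lt_tuples[OF g x] lt_tuples[OF g y] by (simp add: d_v_def sgi_def)
    also have "\<dots> = sgi p (sgn_sum (Suc q) (\<lambda>i. F x (omit (Suc q) i y)))"
      by (simp add: act_sgi[OF g] act_sgn_sum[OF g] eq)
    also have "\<dots> = d_v G p q F x y"
      using x y by (simp add: d_v_def sgi_def)
    finally show "act g (d_v G p q F (ltrans G p (inv\<^bsub>G\<^esub> g) x) (ltrans G (Suc q) (inv\<^bsub>G\<^esub> g) y)) = d_v G p q F x y" .
  qed
qed

lemma sC_mem:
  assumes F: "F \<in> A_lck_fixed G T TA act 0 q"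
  shows "sC G q F \<in> C_lck G T TA act q"
  unfolding C_lck_def mem_Collect_eq
proof (intro conjI)
  show "\<forall>x. x \<notin> tuples G q \<longrightarrow> sC G q F x = 0" by (simp add: sC_def)
  obtain U where U: "identity_nbhd G T U" and Fc: "continuous_map (kify (PQ G T U 0 q)) TA (\<lambda>(x, y). F x y)"
    using F unfolding A_fixed_iff by blast
  have c: "continuous_map (kify (subtopology (tuple_top T q) (Gamma G U q))) TA ((\<lambda>(x, y). F x y) \<circ> (\<lambda>y. (e0 (y 0), y)))"
    by (rule continuous_map_compose[OF continuous_map_kify[OF m_sC] Fc])
  have "continuous_map (kify (subtopology (tuple_top T q) (Gamma G U q))) TA (sC G q F)"
  proof (rule continuous_map_eq[OF c])
    fix z assume "z \<in> topspace (kify (subtopology (tuple_top T q) (Gamma G U q)))"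
    then have "z \<in> tuples G q" using Gamma_sub[of G U q] by auto
    then show "((\<lambda>(x, y). F x y) \<circ> (\<lambda>y. (e0 (y 0), y))) z = sC G q F z"
      by (simp add: sC_def)
  qed
  then show "\<exists>U. identity_nbhd G T U \<and> continuous_map (kify (subtopology (tuple_top T q) (Gamma G U q))) TA (sC G q F)"
    using U by blast
  show "\<forall>g\<in>carrier G. \<forall>x\<in>tuples G q. act g (sC G q F (ltrans G q (inv\<^bsub>G\<^esub> g) x)) = sC G q F x"
  proof (intro ballI)
    fix g y assume g: "g \<in> carrier G" and y: "y \<in> tuples G q"
    have y0: "y 0 \<in> carrier G" using tuples_carrier[OF y, of 0] by simp
    have ex: "e0 (y 0) \<in> tuples G 0" using e0_tuples[OF y0] .
    have "sC G q F (ltrans G q (inv\<^bsub>G\<^esub> g) y) = F (ltrans G 0 (inv\<^bsub>G\<^esub> g) (e0 (y 0))) (ltrans G q (inv\<^bsub>G\<^esub> g) y)"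
      using lt_tuples[OF g y] by (simp add: sC_def ltrans_app0 e0_ltrans)
    then show "act g (sC G q F (ltrans G q (inv\<^bsub>G\<^esub> g) y)) = sC G q F y"
      using F g ex y unfolding A_fixed_iff by (simp add: sC_def)
  qed
qed

lemma jA_mem:
  assumes c: "c \<in> C_lck G T TA act q"
  shows "jA G q c \<in> A_lck_fixed G T TA act 0 q"
  unfolding A_fixed_iff
proof (intro conjI)
  show "\<forall>x y. \<not> (x \<in> tuples G 0 \<and> y \<in> tuples G q) \<longrightarrow> jA G q c x y = 0"
    by (simp add: jA_def)
  obtain U where U: "identity_nbhd G T U" and cc: "continuous_map (kify (subtopology (tuple_top T q) (Gamma G U q))) TA c"
    using c unfolding C_lck_def by blast
  have c1: "continuous_map (kify (PQ G T U 0 q)) TA (c \<circ> snd)"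
    by (rule continuous_map_compose[OF continuous_map_kify[OF m_snd] cc])
  have "continuous_map (kify (PQ G T U 0 q)) TA (\<lambda>(x, y). jA G q c x y)"
  proof (rule continuous_map_eq[OF c1])
    fix z assume "z \<in> topspace (kify (PQ G T U 0 q))"
    then have "fst z \<in> tuples G 0 \<and> snd z \<in> tuples G q" by (rule tsub)
    then show "(c \<circ> snd) z = (\<lambda>(x, y). jA G q c x y) z"
      by (cases z) (simp add: jA_def)
  qed
  then show "\<exists>U. identity_nbhd G T U \<and> continuous_map (kify (PQ G T U 0 q)) TA (\<lambda>(x, y). jA G q c x y)"
    using U by blast
  show "\<forall>g\<in>carrier G. \<forall>x\<in>tuples G 0. \<forall>y\<in>tuples G q.
        act g (jA G q c (ltrans G 0 (inv\<^bsub>G\<^esub> g) x) (ltrans G q (inv\<^bsub>G\<^esub> g) y)) = jA G q c x y"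
  proof (intro ballI)
    fix g x y assume g: "g \<in> carrier G" and x: "x \<in> tuples G 0" and y: "y \<in> tuples G q"
    show "act g (jA G q c (ltrans G 0 (inv\<^bsub>G\<^esub> g) x) (ltrans G q (inv\<^bsub>G\<^esub> g) y)) = jA G q c x y"
      using lt_tuples[OF g x] lt_tuples[OF g y] x y c g unfolding C_lck_def by (simp add: jA_def)
  qed
qed

lemma idn_carrier: "identity_nbhd G T (carrier G)"
  unfolding identity_nbhd_def using topT grp
  by (metis monoid.one_closed group.is_monoid openin_topspace subset_refl)

lemma zero_mem: "0 \<in> A_lck_fixed G T TA act p q"
  unfolding A_fixed_iff
proof (intro conjI)
  show "\<forall>x y. \<not> (x \<in> tuples G p \<and> y \<in> tuples G q) \<longrightarrow> (0::(nat \<Rightarrow> 'g) \<Rightarrow> (nat \<Rightarrow> 'g) \<Rightarrow> 'a) x y = 0" by simp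
  have "continuous_map (kify (PQ G T (carrier G) p q)) TA (\<lambda>(x, y). (0::(nat \<Rightarrow> 'g) \<Rightarrow> (nat \<Rightarrow> 'g) \<Rightarrow> 'a) x y)"
    by (simp add: cp_eq topTA)
  then show "\<exists>U. identity_nbhd G T U \<and> continuous_map (kify (PQ G T U p q)) TA (\<lambda>(x, y). (0::(nat \<Rightarrow> 'g) \<Rightarrow> (nat \<Rightarrow> 'g) \<Rightarrow> 'a) x y)"
    using idn_carrier by blast
  show "\<forall>g\<in>carrier G. \<forall>x\<in>tuples G p. \<forall>y\<in>tuples G q.
        act g ((0::(nat \<Rightarrow> 'g) \<Rightarrow> (nat \<Rightarrow> 'g) \<Rightarrow> 'a) (ltrans G p (inv\<^bsub>G\<^esub> g) x) (ltrans G q (inv\<^bsub>G\<^esub> g) y)) = 0 x y"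
    by (simp add: act_zero)
qed

lemma restrict_U:
  assumes "U' \<subseteq> U" "continuous_map (kify (PQ G T U p q)) TA (\<lambda>(x, y). F x y)"
  shows "continuous_map (kify (PQ G T U' p q)) TA (\<lambda>(x, y). F x y)"
  using continuous_map_compose[OF continuous_map_kify[OF m_mono[OF assms(1)]] assms(2)]
  by (simp add: o_def cp_eq)

lemma idn_Int: "identity_nbhd G T U1 \<Longrightarrow> identity_nbhd G T U2 \<Longrightarrow> identity_nbhd G T (U1 \<inter> U2)"
  unfolding identity_nbhd_def
proof (elim conjE exE, intro conjI)
  fix V1 V2 assume "U1 \<subseteq> carrier G" "openin T V1" "\<one>\<^bsub>G\<^esub> \<in> V1" "V1 \<subseteq> U1" "openin T V2" "\<one>\<^bsub>G\<^esub> \<in> V2" "V2 \<subseteq> U2"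
  then show "U1 \<inter> U2 \<subseteq> carrier G" "\<exists>V. openin T V \<and> \<one>\<^bsub>G\<^esub> \<in> V \<and> V \<subseteq> U1 \<inter> U2"
    by (auto intro!: exI[of _ "V1 \<inter> V2"])
qed

lemma add_mem:
  assumes F: "F \<in> A_lck_fixed G T TA act p q" and F': "F' \<in> A_lck_fixed G T TA act p q"
  shows "F + F' \<in> A_lck_fixed G T TA act p q"
  unfolding A_fixed_iff
proof (intro conjI)
  show "\<forall>x y. \<not> (x \<in> tuples G p \<and> y \<in> tuples G q) \<longrightarrow> (F + F') x y = 0"
    using F F' unfolding A_fixed_iff by simp
  obtain U1 where U1: "identity_nbhd G T U1" and Fc: "continuous_map (kify (PQ G T U1 p q)) TA (\<lambda>(x, y). F x y)"
    using F unfolding A_fixed_iff by blast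
  obtain U2 where U2: "identity_nbhd G T U2" and Fc': "continuous_map (kify (PQ G T U2 p q)) TA (\<lambda>(x, y). F' x y)"
    using F' unfolding A_fixed_iff by blast
  have a: "continuous_map (kify (PQ G T (U1 \<inter> U2) p q)) TA (\<lambda>(x, y). F x y)"
    by (rule restrict_U[OF _ Fc]) blast
  have b: "continuous_map (kify (PQ G T (U1 \<inter> U2) p q)) TA (\<lambda>(x, y). F' x y)"
    by (rule restrict_U[OF _ Fc']) blast
  have "continuous_map (kify (PQ G T (U1 \<inter> U2) p q)) TA (\<lambda>z. (\<lambda>(x, y). F x y) z + (\<lambda>(x, y). F' x y) z)"
    by (rule cont_add[OF a b])
  then have "continuous_map (kify (PQ G T (U1 \<inter> U2) p q)) TA (\<lambda>(x, y). (F + F') x y)"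
    by (simp add: cp_eq)
  then show "\<exists>U. identity_nbhd G T U \<and> continuous_map (kify (PQ G T U p q)) TA (\<lambda>(x, y). (F + F') x y)"
    using idn_Int[OF U1 U2] by blast
  show "\<forall>g\<in>carrier G. \<forall>x\<in>tuples G p. \<forall>y\<in>tuples G q.
        act g ((F + F') (ltrans G p (inv\<^bsub>G\<^esub> g) x) (ltrans G q (inv\<^bsub>G\<^esub> g) y)) = (F + F') x y"
    using F F' unfolding A_fixed_iff by (simp add: act_add)
qed

lemma uminus_mem:
  assumes F: "F \<in> A_lck_fixed G T TA act p q"
  shows "- F \<in> A_lck_fixed G T TA act p q"
  unfolding A_fixed_iff
proof (intro conjI)
  show "\<forall>x y. \<not> (x \<in> tuples G p \<and> y \<in> tuples G q) \<longrightarrow> (- F) x y = 0"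
    using F unfolding A_fixed_iff by simp
  obtain U1 where U1: "identity_nbhd G T U1" and Fc: "continuous_map (kify (PQ G T U1 p q)) TA (\<lambda>(x, y). F x y)"
    using F unfolding A_fixed_iff by blast
  have "continuous_map (kify (PQ G T U1 p q)) TA (\<lambda>z. - (\<lambda>(x, y). F x y) z)"
    by (rule cont_uminus[OF Fc])
  then have "continuous_map (kify (PQ G T U1 p q)) TA (\<lambda>(x, y). (- F) x y)"
    by (simp add: cp_eq)
  then show "\<exists>U. identity_nbhd G T U \<and> continuous_map (kify (PQ G T U p q)) TA (\<lambda>(x, y). (- F) x y)"
    using U1 by blast
  show "\<forall>g\<in>carrier G. \<forall>x\<in>tuples G p. \<forall>y\<in>tuples G q.
        act g ((- F) (ltrans G p (inv\<^bsub>G\<^esub> g) x) (ltrans G q (inv\<^bsub>G\<^esub> g) y)) = (- F) x y"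
    using F unfolding A_fixed_iff by (simp add: act_uminus)
qed

lemma diff_mem:
  assumes "F \<in> A_lck_fixed G T TA act p q" "F' \<in> A_lck_fixed G T TA act p q"
  shows "F - F' \<in> A_lck_fixed G T TA act p q"
  unfolding diff_conv_add_uminus by (rule add_mem[OF assms(1) uminus_mem[OF assms(2)]])

end


context kgm
begin

lemma Tot_iff: "F \<in> Tot G T TA act n \<longleftrightarrow> (\<forall>p\<le>n. F p \<in> A_lck_fixed G T TA act p (n - p)) \<and> (\<forall>p>n. F p = 0)"
  unfolding Tot_def by simp

lemma Tot_zero: "0 \<in> Tot G T TA act n"
  unfolding Tot_iff by (simp add: zero_mem)

lemma Tot_add: "E \<in> Tot G T TA act n \<Longrightarrow> E' \<in> Tot G T TA act n \<Longrightarrow> E + E' \<in> Tot G T TA act n"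
  unfolding Tot_iff by (simp add: add_mem)

lemma Tot_diff: "E \<in> Tot G T TA act n \<Longrightarrow> E' \<in> Tot G T TA act n \<Longrightarrow> E - E' \<in> Tot G T TA act n"
  unfolding Tot_iff by (simp add: diff_mem)

lemma Tot_single: "k \<le> n \<Longrightarrow> e \<in> A_lck_fixed G T TA act k (n - k) \<Longrightarrow> (\<lambda>p. if p = k then e else 0) \<in> Tot G T TA act n"
  unfolding Tot_iff by (simp add: zero_mem)

lemma Tot_dTot: assumes E: "E \<in> Tot G T TA act n" shows "d_Tot G n E \<in> Tot G T TA act (Suc n)"
  unfolding Tot_iff
proof (intro conjI allI impI)
  fix p assume p: "p \<le> Suc n"
  have a: "(if 0 < p then d_h G (p - 1) (n - (p - 1)) (E (p - 1)) else 0) \<in> A_lck_fixed G T TA act p (Suc n - p)"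
  proof (cases p)
    case 0 then show ?thesis by (simp add: zero_mem)
  next
    case (Suc P)
    then have "E P \<in> A_lck_fixed G T TA act P (n - P)" using E p unfolding Tot_iff by simp
    then show ?thesis using Suc by (simp add: dh_mem)
  qed
  have b: "(if p \<le> n then d_v G p (n - p) (E p) else 0) \<in> A_lck_fixed G T TA act p (Suc n - p)"
  proof (cases "p \<le> n")
    case True
    then have "E p \<in> A_lck_fixed G T TA act p (n - p)" using E unfolding Tot_iff by simp
    then show ?thesis using True dv_mem[of "E p" p "n - p"] by (simp add: Suc_diff_le)
  qed (simp add: zero_mem)
  show "d_Tot G n E p \<in> A_lck_fixed G T TA act p (Suc n - p)"
    using add_mem[OF a b] p by (simp add: d_Tot_def)
next
  fix p assume "Suc n < p" then show "d_Tot G n E p = 0" by (simp add: d_Tot_def)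
qed

lemma j_mem: "c \<in> C_lck G T TA act n \<Longrightarrow> j_hk G n c \<in> Tot G T TA act n"
  unfolding Tot_iff j_hk_eq by (simp add: jA_mem zero_mem)

lemma jA_inj:
  assumes "\<And>y. y \<notin> tuples G q \<Longrightarrow> c y = 0" "\<And>y. y \<notin> tuples G q \<Longrightarrow> c' y = 0"
    and "jA G q c = jA G q c'"
  shows "c = c'"
proof (rule ext)
  fix y
  have one: "\<one>\<^bsub>G\<^esub> \<in> carrier G" using grp by (simp add: group.is_monoid monoid.one_closed)
  have x: "e0 \<one>\<^bsub>G\<^esub> \<in> tuples G 0" by (rule e0_tuples[OF one])
  show "c y = c' y"
  proof (cases "y \<in> tuples G q")
    case True
    have "jA G q c (e0 \<one>\<^bsub>G\<^esub>) y = jA G q c' (e0 \<one>\<^bsub>G\<^esub>) y" using assms(3) by simp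
    then show ?thesis using True x by (simp add: jA_def)
  qed (simp add: assms)
qed

lemma dC_supp: "y \<notin> tuples G (Suc q) \<Longrightarrow> d_C G q c y = 0"
  by (simp add: d_C_def)

lemma C_supp: "c \<in> C_lck G T TA act q \<Longrightarrow> y \<notin> tuples G q \<Longrightarrow> c y = 0"
  unfolding C_lck_def by blast

lemma cob_zero: "0 \<in> coboundaries (Tot G T TA act) (d_Tot G) n"
  unfolding coboundaries_def using Tot_zero dTot_zero by (cases n) (auto intro!: image_eqI[of 0 _ 0])

end


context kgm
begin

lemma dTot_at: "d_Tot G n F p = (if p \<le> Suc n then
       (if 0 < p then d_h G (p - 1) (n - (p - 1)) (F (p - 1)) else 0)
     + (if p \<le> n then d_v G p (n - p) (F p) else 0) else 0)"
  by (simp add: d_Tot_def)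

lemma surj_aux:
  "\<forall>F. F \<in> Tot G T TA act n \<longrightarrow> d_Tot G n F = 0 \<longrightarrow> (\<forall>p>k. F p = 0) \<longrightarrow>
     (\<exists>c\<in>cocycles (C_lck G T TA act) (d_C G) n. F - j_hk G n c \<in> coboundaries (Tot G T TA act) (d_Tot G) n)"
proof (induction k)
  case 0
  show ?case
  proof (intro allI impI)
    fix F assume F: "F \<in> Tot G T TA act n" and dF: "d_Tot G n F = 0" and z: "\<forall>p>0. F p = 0"
    have "F 0 \<in> A_lck_fixed G T TA act 0 (n - 0)" using F unfolding Tot_iff by blast
    then have F0: "F 0 \<in> A_lck_fixed G T TA act 0 n" by simp
    have z1: "F (Suc 0) = 0" using z by simp
    have "d_Tot G n F (Suc 0) = 0" using dF by simp
    moreover have "d_v G (Suc 0) (n - Suc 0) (F (Suc 0)) = 0" unfolding z1 by (rule dv_zero)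
    ultimately have h: "d_h G 0 n (F 0) = 0" unfolding dTot_at by (simp split: if_split_asm)
    have "d_Tot G n F 0 = 0" using dF by simp
    then have v: "d_v G 0 n (F 0) = 0" by (simp add: dTot_at)
    define c where "c = sC G n (F 0)"
    have cC: "c \<in> C_lck G T TA act n" unfolding c_def by (rule sC_mem[OF F0])
    have jc: "jA G n c = F 0" unfolding c_def
      by (rule dh0_sC[OF _ h]) (use F0 in \<open>simp add: A_fixed_iff\<close>)
    have "jA G (Suc n) (d_C G n c) = jA G (Suc n) 0"
      using dv_jA[of G n c] jc v by (simp add: jA_def fun_eq_iff)
    then have dc: "d_C G n c = 0"
      by (rule jA_inj[rotated 2]) (simp_all add: dC_supp)
    have "F = j_hk G n c"
    proof (rule ext)
      fix p show "F p = j_hk G n c p" using jc z by (cases p) (simp_all add: j_hk_eq)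
    qed
    then have "F - j_hk G n c = 0" by simp
    then show "\<exists>c\<in>cocycles (C_lck G T TA act) (d_C G) n. F - j_hk G n c \<in> coboundaries (Tot G T TA act) (d_Tot G) n"
      using cC dc cob_zero unfolding cocycles_def by auto
  qed
next
  case (Suc k)
  show ?case
  proof (intro allI impI)
    fix F assume F: "F \<in> Tot G T TA act n" and dF: "d_Tot G n F = 0" and z: "\<forall>p>Suc k. F p = 0"
    show "\<exists>c\<in>cocycles (C_lck G T TA act) (d_C G) n. F - j_hk G n c \<in> coboundaries (Tot G T TA act) (d_Tot G) n"
    proof (cases "Suc k \<le> n")
      case False
      have Fz: "\<forall>p>n. F p = 0" using F unfolding Tot_iff by blast
      have "\<forall>p>k. F p = 0"
      proof (intro allI impI)
        fix p assume "k < p"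
        then consider "p = Suc k" | "p > Suc k" by linarith
        then show "F p = 0"
        proof cases
          case 1 then show ?thesis using Fz False by simp
        next
          case 2 then show ?thesis using z by simp
        qed
      qed
      then show ?thesis using Suc.IH F dF by blast
    next
      case True
      then obtain m where n: "n = Suc m" by (cases n) auto
      have km: "k \<le> m" using True n by simp
      have FS: "F (Suc k) \<in> A_lck_fixed G T TA act (Suc k) (n - Suc k)" using F True unfolding Tot_iff by blast
      have z2: "F (Suc (Suc k)) = 0" using z by simp
      have "d_Tot G n F (Suc (Suc k)) = 0" using dF by simp
      moreover have "d_v G (Suc (Suc k)) (n - Suc (Suc k)) (F (Suc (Suc k))) = 0" unfolding z2 by (rule dv_zero)
      ultimately have h: "d_h G (Suc k) (n - Suc k) (F (Suc k)) = 0" using True unfolding dTot_at by (simp split: if_split_asm)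
      define e where "e = sA G k (n - Suc k) (F (Suc k))"
      have eA: "e \<in> A_lck_fixed G T TA act k (m - k)" unfolding e_def using sA_mem[OF FS] n by simp
      have de: "d_h G k (n - Suc k) e = F (Suc k)" unfolding e_def
        by (rule dh_sA[OF _ h]) (use FS in \<open>simp add: A_fixed_iff\<close>)
      define E where "E = (\<lambda>p. if p = k then e else 0)"
      have ET: "E \<in> Tot G T TA act m" unfolding E_def by (rule Tot_single[OF km eA])
      define F' where "F' = F - d_Tot G m E"
      have F'T: "F' \<in> Tot G T TA act n" unfolding F'_def n
        by (rule Tot_diff[OF F[unfolded n] Tot_dTot[OF ET]])
      have dF': "d_Tot G n F' = 0" unfolding F'_def dTot_diff using dF n dTot_dTot[of G m E] by simp
      have dE: "d_Tot G m E (Suc k) = F (Suc k)"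
        using de n km by (simp add: dTot_at E_def)
      have dE2: "d_Tot G m E p = 0" if "p > Suc k" for p
      proof -
        have "p - Suc 0 \<noteq> k" "p \<noteq> k" using that by arith+
        then show ?thesis by (simp add: dTot_at E_def)
      qed
      have z': "\<forall>p>k. F' p = 0"
      proof (intro allI impI)
        fix p assume "p > k"
        then consider "p = Suc k" | "p > Suc k" by linarith
        then show "F' p = 0"
        proof cases
          case 1 then show ?thesis using dE by (simp add: F'_def)
        next
          case 2 then show ?thesis using dE2[OF 2] z[rule_format, OF 2] by (simp add: F'_def)
        qed
      qed
      obtain c where c: "c \<in> cocycles (C_lck G T TA act) (d_C G) n"
        and cb: "F' - j_hk G n c \<in> coboundaries (Tot G T TA act) (d_Tot G) n"
        using Suc.IH F'T dF' z' by blast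
      obtain E' where E': "E' \<in> Tot G T TA act m" "F' - j_hk G n c = d_Tot G m E'"
        using cb n unfolding coboundaries_def by auto
      have "F - j_hk G n c = d_Tot G m (E' + E)"
        using E'(2) unfolding dTot_add F'_def by (simp add: algebra_simps)
      moreover have "E' + E \<in> Tot G T TA act m" by (rule Tot_add[OF E'(1) ET])
      ultimately have "F - j_hk G n c \<in> coboundaries (Tot G T TA act) (d_Tot G) n"
        unfolding coboundaries_def n by simp
      then show ?thesis using c by blast
    qed
  qed
qed


lemma inj_aux:
  assumes cC: "c \<in> C_lck G T TA act (Suc m)"
  shows "\<forall>E. E \<in> Tot G T TA act m \<longrightarrow> (\<forall>p>k. E p = 0) \<longrightarrow> j_hk G (Suc m) c = d_Tot G m E \<longrightarrow>
     c \<in> d_C G m ` C_lck G T TA act m"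
proof (induction k)
  case 0
  show ?case
  proof (intro allI impI)
    fix E assume E: "E \<in> Tot G T TA act m" and z: "\<forall>p>0. E p = 0" and jc: "j_hk G (Suc m) c = d_Tot G m E"
    have "E 0 \<in> A_lck_fixed G T TA act 0 (m - 0)" using E unfolding Tot_iff by blast
    then have E0: "E 0 \<in> A_lck_fixed G T TA act 0 m" by simp
    have z1: "E (Suc 0) = 0" using z by simp
    have "d_Tot G m E (Suc 0) = j_hk G (Suc m) c (Suc 0)" using jc by simp
    then have "d_Tot G m E (Suc 0) = 0" by (simp add: j_hk_eq)
    moreover have "d_v G (Suc 0) (m - Suc 0) (E (Suc 0)) = 0" unfolding z1 by (rule dv_zero)
    ultimately have h: "d_h G 0 m (E 0) = 0" unfolding dTot_at by (simp split: if_split_asm)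
    have "d_Tot G m E 0 = j_hk G (Suc m) c 0" using jc by simp
    then have v: "d_v G 0 m (E 0) = jA G (Suc m) c" by (simp add: dTot_at j_hk_eq)
    define b where "b = sC G m (E 0)"
    have bC: "b \<in> C_lck G T TA act m" unfolding b_def by (rule sC_mem[OF E0])
    have jb: "jA G m b = E 0" unfolding b_def
      by (rule dh0_sC[OF _ h]) (use E0 in \<open>simp add: A_fixed_iff\<close>)
    have "jA G (Suc m) c = jA G (Suc m) (d_C G m b)"
      using dv_jA[of G m b] jb v by simp
    then have "c = d_C G m b"
      by (rule jA_inj[rotated 2]) (simp_all add: dC_supp C_supp[OF cC])
    then show "c \<in> d_C G m ` C_lck G T TA act m" using bC by blast
  qed
next
  case (Suc k)
  show ?case
  proof (intro allI impI)
    fix E assume E: "E \<in> Tot G T TA act m" and z: "\<forall>p>Suc k. E p = 0" and jc: "j_hk G (Suc m) c = d_Tot G m E"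
    show "c \<in> d_C G m ` C_lck G T TA act m"
    proof (cases "Suc k \<le> m")
      case False
      have Ez: "\<forall>p>m. E p = 0" using E unfolding Tot_iff by blast
      have "\<forall>p>k. E p = 0"
      proof (intro allI impI)
        fix p assume "k < p"
        then consider "p = Suc k" | "p > Suc k" by linarith
        then show "E p = 0"
        proof cases
          case 1 then show ?thesis using Ez False by simp
        next
          case 2 then show ?thesis using z by simp
        qed
      qed
      then show ?thesis using Suc.IH E jc by blast
    next
      case True
      then obtain m' where m: "m = Suc m'" by (cases m) auto
      have km: "k \<le> m'" using True m by simp
      have ES: "E (Suc k) \<in> A_lck_fixed G T TA act (Suc k) (m - Suc k)" using E True unfolding Tot_iff by blast
      have z2: "E (Suc (Suc k)) = 0" using z by simp
      have "d_Tot G m E (Suc (Suc k)) = j_hk G (Suc m) c (Suc (Suc k))" using jc by simp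
      then have "d_Tot G m E (Suc (Suc k)) = 0" by (simp add: j_hk_eq)
      moreover have "d_v G (Suc (Suc k)) (m - Suc (Suc k)) (E (Suc (Suc k))) = 0" unfolding z2 by (rule dv_zero)
      ultimately have h: "d_h G (Suc k) (m - Suc k) (E (Suc k)) = 0" using True unfolding dTot_at by (simp split: if_split_asm)
      define e where "e = sA G k (m - Suc k) (E (Suc k))"
      have eA: "e \<in> A_lck_fixed G T TA act k (m' - k)" unfolding e_def using sA_mem[OF ES] m by simp
      have de: "d_h G k (m - Suc k) e = E (Suc k)" unfolding e_def
        by (rule dh_sA[OF _ h]) (use ES in \<open>simp add: A_fixed_iff\<close>)
      define E'' where "E'' = (\<lambda>p. if p = k then e else 0)"
      have E''T: "E'' \<in> Tot G T TA act m'" unfolding E''_def by (rule Tot_single[OF km eA])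
      define E' where "E' = E - d_Tot G m' E''"
      have E'T: "E' \<in> Tot G T TA act m" unfolding E'_def m
        by (rule Tot_diff[OF E[unfolded m] Tot_dTot[OF E''T]])
      have jc': "j_hk G (Suc m) c = d_Tot G m E'" unfolding E'_def dTot_diff using jc m dTot_dTot[of G m' E''] by simp
      have dE: "d_Tot G m' E'' (Suc k) = E (Suc k)"
        using de m km by (simp add: dTot_at E''_def)
      have dE2: "d_Tot G m' E'' p = 0" if "p > Suc k" for p
      proof -
        have "p - Suc 0 \<noteq> k" "p \<noteq> k" using that by arith+
        then show ?thesis by (simp add: dTot_at E''_def)
      qed
      have z': "\<forall>p>k. E' p = 0"
      proof (intro allI impI)
        fix p assume "p > k"
        then consider "p = Suc k" | "p > Suc k" by linarith
        then show "E' p = 0"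
        proof cases
          case 1 then show ?thesis using dE by (simp add: E'_def)
        next
          case 2 then show ?thesis using dE2[OF 2] z[rule_format, OF 2] by (simp add: E'_def)
        qed
      qed
      show ?thesis using Suc.IH E'T z' jc' by blast
    qed
  qed
qed

end

theorem mainTheorem10:
  fixes G :: "('g, 'b) monoid_scheme" and T :: "'g topology"
    and TA :: "('a::ab_group_add) topology" and act :: "'g \<Rightarrow> 'a \<Rightarrow> 'a"
  assumes "k_group G T"
    and "cont_G_module G T TA act"
  shows "cohomology_iso (C_lck G T TA act) (d_C G) (Tot G T TA act) (d_Tot G) (j_hk G)"
proof -
  interpret kgm G T TA act using assms by unfold_locales
  show ?thesis
    unfolding cohomology_iso_def
  proof (intro conjI allI ballI impI)
    fix n c assume c: "c \<in> C_lck G T TA act n"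
    show "j_hk G n c \<in> Tot G T TA act n" by (rule j_mem[OF c])
    show "d_Tot G n (j_hk G n c) = j_hk G (Suc n) (d_C G n c)" by (rule dTot_j)
  next
    fix n z assume z: "z \<in> cocycles (Tot G T TA act) (d_Tot G) n"
    then have zT: "z \<in> Tot G T TA act n" and dz: "d_Tot G n z = 0" unfolding cocycles_def by auto
    have "\<forall>p>n. z p = 0" using zT unfolding Tot_iff by blast
    then show "\<exists>c\<in>cocycles (C_lck G T TA act) (d_C G) n. z - j_hk G n c \<in> coboundaries (Tot G T TA act) (d_Tot G) n"
      using surj_aux[of n n] zT dz by blast
  next
    fix n c assume c: "c \<in> cocycles (C_lck G T TA act) (d_C G) n"
      and jb: "j_hk G n c \<in> coboundaries (Tot G T TA act) (d_Tot G) n"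
    have cC: "c \<in> C_lck G T TA act n" using c unfolding cocycles_def by auto
    show "c \<in> coboundaries (C_lck G T TA act) (d_C G) n"
    proof (cases n)
      case 0
      then have "j_hk G 0 c = 0" using jb unfolding coboundaries_def by simp
      then have "j_hk G 0 c 0 = 0" by simp
      then have "jA G 0 c = jA G 0 0" by (simp add: j_hk_eq jA_def fun_eq_iff)
      then have "c = 0" by (rule jA_inj[rotated 2]) (simp_all add: C_supp[OF cC[unfolded 0]])
      then show ?thesis using 0 unfolding coboundaries_def by simp
    next
      case (Suc m)
      then obtain E where E: "E \<in> Tot G T TA act m" "j_hk G (Suc m) c = d_Tot G m E"
        using jb unfolding coboundaries_def by auto
      have "\<forall>p>m. E p = 0" using E(1) unfolding Tot_iff by blast
      then have "c \<in> d_C G m ` C_lck G T TA act m"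
        using inj_aux[OF cC[unfolded Suc], of m] E by blast
      then show ?thesis using Suc unfolding coboundaries_def by simp
    qed
  qed
qed


end
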